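(* Let $L/K$ be a finite separable field extension of degree $[L:K]=p^e$, where $p$ is an odd prime and $e\geq 1$, and suppose that $L/K$ admits a Hopf--Galois structure of cyclic type. Let $\widetilde{L}$ be the normal closure of $L/K$. Then for every extension $L'/K$ parallel to $L/K$, the following are equivalent: (1) $L'/K$ admits a Hopf--Galois structure of cyclic type; (2) $L'/K$ is conjugate to $L/K$, i.e. $L'=g(L)$ for some $g\in \mathrm{Gal}(\widetilde{L}/K)$.
   Context: For a finite separable extension $L/K$ with normal closure $\widetilde{L}$, put $G=\mathrm{Gal}(\widetilde{L}/K)$ and $G'=\mathrm{Gal}(\widetilde{L}/L)$, and let $\lambda:G\to\mathrm{Sym}(G/G')$, $\lambda(g)(hG')=ghG'$. By Greither--Pareigis, Hopf--Galois structures on $L/K$ correspond to regular subgroups $N$ of $\mathrm{Sym}(G/G')$ (transitive with trivial point stabilisers) normalised by $\lambda(G)$; the isomorphism class of $N$ is the type of the structure. Thus "$L/K$ admits a Hopf--Galois structure of cyclic type" means there is such a regular subgroup $N$ which is cyclic (necessarily of order $[L:K]$). An extension $L'/K$ is parallel to $L/K$ if $L'$ is an intermediate field of $\widetilde{L}/K$ with $[L':K]=[L:K]$. *)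

theory Defs
  imports "HOL-Algebra.Left_Coset" "HOL-Algebra.Bij" "HOL-Algebra.Generated_Groups"
    "HOL-Computational_Algebra.Primes"
begin

text \<open>Group-theoretic (Greither--Pareigis) translation. G = Gal(Ltilde/K),
  H = Gal(Ltilde/L) a subgroup; the coset space G/H is lcosets G H.\<close>

definition lam :: "('a, 'b) monoid_scheme \<Rightarrow> 'a set \<Rightarrow> 'a \<Rightarrow> ('a set \<Rightarrow> 'a set)" where
  "lam G H g = (\<lambda>C \<in> lcosets\<^bsub>G\<^esub> H. g <#\<^bsub>G\<^esub> C)"

definition regular_subgroup :: "'x set \<Rightarrow> ('x \<Rightarrow> 'x) set \<Rightarrow> bool" where
  "regular_subgroup X N \<longleftrightarrow>
     subgroup N (BijGroup X) \<and>
     (\<forall>x\<in>X. \<forall>y\<in>X. \<exists>\<sigma>\<in>N. \<sigma> x = y) \<and>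
     (\<forall>\<sigma>\<in>N. \<forall>x\<in>X. \<sigma> x = x \<longrightarrow> \<sigma> = \<one>\<^bsub>BijGroup X\<^esub>)"

definition cyclic_subgroup :: "('c, 'd) monoid_scheme \<Rightarrow> 'c set \<Rightarrow> bool" where
  "cyclic_subgroup M N \<longleftrightarrow> (\<exists>\<sigma>\<in>N. N = generate M {\<sigma>})"

text \<open>The extension corresponding to subgroup H admits a Hopf--Galois structure of cyclic type:
  there is a cyclic regular subgroup N of Sym(G/H) normalised by lambda(G).\<close>
definition HGS_cyclic :: "('a, 'b) monoid_scheme \<Rightarrow> 'a set \<Rightarrow> bool" where
  "HGS_cyclic G H \<longleftrightarrow>
    (\<exists>N. regular_subgroup (lcosets\<^bsub>G\<^esub> H) N \<and>
         cyclic_subgroup (BijGroup (lcosets\<^bsub>G\<^esub> H)) N \<and>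
         (\<forall>g\<in>carrier G. \<forall>\<eta>\<in>N.
            lam G H g \<otimes>\<^bsub>BijGroup (lcosets\<^bsub>G\<^esub> H)\<^esub> \<eta>
              \<otimes>\<^bsub>BijGroup (lcosets\<^bsub>G\<^esub> H)\<^esub> inv\<^bsub>BijGroup (lcosets\<^bsub>G\<^esub> H)\<^esub> (lam G H g) \<in> N))"

end

theory Submission
  imports Defs "HOL-Number_Theory.Number_Theory" "HOL-Algebra.Multiplicative_Group"
begin

definition gs :: "int \<Rightarrow> nat \<Rightarrow> int" where
  "gs a k = (\<Sum>i<k. a ^ i)"

lemma gs_0[simp]: "gs a 0 = 0" by (simp add: gs_def)
lemma gs_Suc: "gs a (Suc k) = gs a k + a ^ k" by (simp add: gs_def)
lemma gs_Suc': "gs a (Suc k) = a * gs a k + 1"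
proof -
  have "(\<Sum>i<Suc k. a^i) = a^0 + (\<Sum>i<k. a^(Suc i))" by (rule sum.lessThan_Suc_shift)
  then show ?thesis unfolding gs_def by (simp add: sum_distrib_left)
qed
lemma gs_1[simp]: "gs 1 k = int k" by (induction k) (auto simp: gs_Suc)

lemma gs_pow: "a ^ k - 1 = (a - 1) * gs a k"
proof (induction k)
  case (Suc k)
  have "a ^ Suc k - 1 = a * (a ^ k - 1) + (a - 1)" by (simp add: algebra_simps)
  also have "\<dots> = (a - 1) * gs a (Suc k)" using Suc by (simp only: gs_Suc') (simp add: algebra_simps)
  finally show ?case .
qed simp

lemma gs_add: "gs a (m + k) = gs a m + a ^ m * gs a k"
  by (induction k) (auto simp: gs_Suc algebra_simps power_add)

lemma gs_mult: "gs a (m * k) = gs a m * gs (a ^ m) k"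
proof (induction k)
  case 0 then show ?case by simp
next
  case (Suc k)
  have "gs a (m * Suc k) = gs a (m * k + m)" by (simp add: algebra_simps)
  also have "\<dots> = gs a (m*k) + a ^ (m*k) * gs a m" by (rule gs_add)
  also have "\<dots> = gs a m * gs (a ^ m) k + (a ^ m) ^ k * gs a m"
    using Suc by (simp add: power_mult)
  also have "\<dots> = gs a m * gs (a ^ m) (Suc k)" by (simp add: gs_Suc algebra_simps)
  finally show ?case .
qed

lemma pow_lin:
  fixes p c :: int
  shows "\<exists>s. (1 + p * c) ^ k = 1 + int k * p * c + p^2 * s"
proof (induction k)
  case 0 then show ?case by (intro exI[of _ 0]) simp
next
  case (Suc k)
  then obtain s where s: "(1 + p * c) ^ k = 1 + int k * p * c + p^2 * s" by blast
  have "(1 + p * c) ^ Suc k = (1 + p*c) * (1 + int k * p * c + p^2 * s)" using s by simp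
  also have "\<dots> = 1 + int (Suc k) * p * c + p^2 * (int k * c * c + s + p * c * s)"
    by (simp add: algebra_simps power2_eq_square)
  finally show ?case by blast
qed

lemma gs_lin:
  fixes p c :: int
  shows "\<exists>r. 2 * gs (1 + p * c) k = 2 * int k + p * c * int k * (int k - 1) + p^2 * r"
proof (induction k)
  case 0 then show ?case by (intro exI[of _ 0]) simp
next
  case (Suc k)
  then obtain r where r: "2 * gs (1 + p * c) k = 2 * int k + p * c * int k * (int k - 1) + p^2 * r" by blast
  obtain s where s: "(1 + p * c) ^ k = 1 + int k * p * c + p^2 * s" using pow_lin by blast
  have "2 * gs (1 + p * c) (Suc k) = 2 * gs (1 + p * c) k + 2 * (1 + p * c) ^ k"
    by (simp add: gs_Suc)
  also have "\<dots> = 2 * int (Suc k) + p * c * int (Suc k) * (int (Suc k) - 1) + p^2 * (r + 2 * s)"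
    using r s by (simp add: algebra_simps)
  finally show ?case by blast
qed

lemma gs_p_mod:
  fixes p :: int and a :: int
  assumes "odd p" "p dvd a - 1" "p > 0"
  shows "p^2 dvd gs a (nat p) - p"
proof -
  obtain c where c: "a = 1 + p * c" using assms(2) by (metis add.commute diff_add_cancel dvdE)
  obtain r where r: "2 * gs a (nat p) = 2 * p + p * c * p * (p - 1) + p^2 * r"
    using gs_lin[of p c "nat p"] assms(3) c by auto
  obtain h where h: "p - 1 = 2 * h" using assms(1) by (auto elim: oddE)
  have "2 * (gs a (nat p) - p) = p^2 * (2 * (c * h) + r)"
    using r h by (simp add: algebra_simps power2_eq_square)
  hence "p^2 dvd 2 * (gs a (nat p) - p)" by simp
  moreover have "coprime (p^2) 2" using assms(1) by simp
  ultimately show ?thesis using coprime_dvd_mult_right_iff by blast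
qed

lemma gs_ppow:
  fixes p :: nat and a :: int
  assumes "prime p" "odd p" "int p dvd a - 1"
  shows "\<exists>u. gs a (p ^ j) = int p ^ j * u \<and> int p dvd u - 1"
proof (induction j)
  case 0 then show ?case by (intro exI[of _ 1]) (simp add: gs_def)
next
  case (Suc j)
  then obtain u where u: "gs a (p ^ j) = int p ^ j * u" "int p dvd u - 1" by blast
  have "int p dvd a ^ (p^j) - 1" using gs_pow[of a "p^j"] assms(3) by simp
  hence "int p ^ 2 dvd gs (a ^ (p^j)) (nat (int p)) - int p"
    using gs_p_mod[of "int p" "a ^ (p^j)"] assms prime_gt_0_nat by auto
  hence "int p ^ 2 dvd gs (a ^ (p^j)) p - int p" by simp
  then obtain t where "gs (a ^ (p^j)) p - int p = int p ^ 2 * t" by (elim dvdE)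
  hence t: "gs (a ^ (p^j)) p = int p + int p ^ 2 * t" by simp
  have "gs a (p ^ Suc j) = gs a (p^j * p)" by (simp add: algebra_simps)
  also have "\<dots> = gs a (p^j) * gs (a ^ (p^j)) p" by (rule gs_mult)
  also have "\<dots> = int p ^ Suc j * (u * (1 + int p * t))" using u t by (simp add: algebra_simps power2_eq_square)
  finally have 1: "gs a (p ^ Suc j) = int p ^ Suc j * (u * (1 + int p * t))" .
  have "u * (1 + int p * t) - 1 = (u - 1) + int p * (u * t)" by (simp add: algebra_simps)
  moreover have "int p dvd (u - 1) + int p * (u * t)" using u(2) by simp
  ultimately have "int p dvd u * (1 + int p * t) - 1" by metis
  with 1 show ?case by blast
qed

lemma pow_ppow_dvd:
  fixes p :: nat and a :: int
  assumes "prime p" "odd p" "int p dvd a - 1" "int p ^ t dvd a - 1"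
  shows "int p ^ (t + j) dvd a ^ (p ^ j) - 1"
proof -
  obtain u where u: "gs a (p ^ j) = int p ^ j * u" using gs_ppow[OF assms(1-3)] by blast
  have e: "a ^ (p ^ j) - 1 = (a - 1) * (int p ^ j * u)" using gs_pow[of a "p^j"] u by simp
  have "int p ^ t * int p ^ j dvd (a - 1) * (int p ^ j * u)"
    by (rule mult_dvd_mono[OF assms(4)]) simp
  thus ?thesis unfolding e power_add .
qed

lemma prime_int_p: "prime p \<Longrightarrow> prime (int p)"
  by simp

lemma not_dvd_coprime_int:
  fixes p :: nat and u :: int
  assumes "prime p" "\<not> int p dvd u"
  shows "coprime (int p) u"
  using prime_imp_coprime[OF prime_int_p[OF assms(1)] assms(2)] .

lemma dvd_sub1_not_dvd:
  fixes p :: nat and u :: int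
  assumes "prime p" "int p dvd u - 1"
  shows "\<not> int p dvd u"
proof
  assume "int p dvd u"
  hence "int p dvd u - (u - 1)" using assms(2) by (rule dvd_diff)
  hence "int p dvd 1" by simp
  thus False using not_prime_unit prime_int_p[OF assms(1)] by blast
qed

lemma fp_crit:
  fixes p e :: nat and a c :: int
  assumes "prime p" "odd p" "e \<ge> 1"
    and hyp: "\<And>k. int p ^ e dvd a ^ k - 1 \<Longrightarrow> int p ^ e dvd c * gs a k"
  shows "\<exists>y. int p ^ e dvd a * y + c - y"
proof (cases "int p ^ e dvd a - 1")
  case True
  hence "int p ^ e dvd c * gs a 1" using hyp[of 1] by simp
  hence "int p ^ e dvd a * 0 + c - 0" by (simp add: gs_def)
  then show ?thesis by blast
next
  case False
  have pnu: "\<not> is_unit (int p)" using not_prime_unit prime_int_p[OF assms(1)] by blast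
  have a1: "a - 1 \<noteq> 0" using False by auto
  define t where "t = multiplicity (int p) (a - 1)"
  have tdvd: "int p ^ t dvd a - 1" unfolding t_def by (rule multiplicity_dvd)
  have tndvd: "\<not> int p ^ Suc t dvd a - 1" unfolding t_def
    using power_dvd_iff_le_multiplicity[OF a1 pnu, of "Suc t"] unfolding t_def by simp
  have te: "t < e"
  proof (rule ccontr)
    assume "\<not> t < e"
    hence "int p ^ e dvd int p ^ t" by (simp add: le_imp_power_dvd)
    with tdvd False show False using dvd_trans by blast
  qed
  obtain w where w: "a - 1 = int p ^ t * w" using tdvd by (elim dvdE)
  have pw: "\<not> int p dvd w"
  proof
    assume "int p dvd w"
    then obtain w' where "w = int p * w'" by (elim dvdE)
    hence "a - 1 = int p ^ Suc t * w'" using w by simp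
    thus False using tndvd by simp
  qed
  have ct: "int p ^ t dvd c"
  proof (cases "t = 0")
    case True then show ?thesis by simp
  next
    case False
    have "int p dvd int p ^ t" using False by simp
    hence pa: "int p dvd a - 1" using tdvd by (rule dvd_trans)
    obtain u where u: "gs a (p ^ (e - t)) = int p ^ (e - t) * u" "int p dvd u - 1"
      using gs_ppow[OF assms(1,2) pa] by blast
    have "int p ^ (t + (e - t)) dvd a ^ (p ^ (e - t)) - 1"
      using pow_ppow_dvd[OF assms(1,2) pa tdvd] by blast
    hence "int p ^ e dvd a ^ (p ^ (e - t)) - 1" using te by simp
    hence "int p ^ e dvd c * (int p ^ (e - t) * u)" using hyp[of "p ^ (e - t)"] u(1) by simp
    moreover have "int p ^ e = int p ^ (e - t) * int p ^ t" using te
      by (simp add: power_add[symmetric])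
    ultimately have "int p ^ (e - t) * int p ^ t dvd int p ^ (e - t) * (c * u)"
      by (simp add: algebra_simps)
    hence "int p ^ t dvd c * u" using assms(1) by (simp add: prime_gt_0_nat)
    moreover have "coprime (int p ^ t) u"
      using not_dvd_coprime_int[OF assms(1) dvd_sub1_not_dvd[OF assms(1) u(2)]] by simp
    ultimately show ?thesis using coprime_dvd_mult_left_iff by blast
  qed
  then obtain c' where c': "c = int p ^ t * c'" by (elim dvdE)
  have "coprime (int p) w" using not_dvd_coprime_int[OF assms(1) pw] .
  hence "coprime w (int p ^ e)" by (simp add: coprime_commute)
  then obtain i where i: "[w * i = 1] (mod int p ^ e)" using cong_solve_coprime_int by blast
  define y where "y = - c' * i"
  have "a * y + c - y = int p ^ t * c' * (1 - w * i)" using w c' unfolding y_def by (simp add: algebra_simps)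
  moreover have "int p ^ e dvd 1 - w * i" using i by (simp add: cong_iff_dvd_diff dvd_diff_commute)
  ultimately have "int p ^ e dvd a * y + c - y" by simp
  then show ?thesis by blast
qed

locale affrep = group G for G (structure) +
  fixes n :: int and A B :: "'a \<Rightarrow> int"
  assumes n_gt: "n > 1"
  and A_range: "g \<in> carrier G \<Longrightarrow> 0 \<le> A g \<and> A g < n"
  and B_range: "g \<in> carrier G \<Longrightarrow> 0 \<le> B g \<and> B g < n"
  and A_mult: "g \<in> carrier G \<Longrightarrow> h \<in> carrier G \<Longrightarrow> [A (g \<otimes> h) = A g * A h] (mod n)"
  and B_mult: "g \<in> carrier G \<Longrightarrow> h \<in> carrier G \<Longrightarrow> [B (g \<otimes> h) = A g * B h + B g] (mod n)"
  and A_one: "A \<one> = 1" and B_one: "B \<one> = 0"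
begin

lemma A_eqI: "g \<in> carrier G \<Longrightarrow> [A g = x] (mod n) \<Longrightarrow> 0 \<le> x \<Longrightarrow> x < n \<Longrightarrow> A g = x"
  using A_range cong_less_imp_eq_int by blast
lemma B_eqI: "g \<in> carrier G \<Longrightarrow> [B g = x] (mod n) \<Longrightarrow> 0 \<le> x \<Longrightarrow> x < n \<Longrightarrow> B g = x"
  using B_range cong_less_imp_eq_int by blast
lemma A_eq1: "g \<in> carrier G \<Longrightarrow> [A g = 1] (mod n) \<Longrightarrow> A g = 1"
  using A_eqI n_gt by simp
lemma B_eq0: "g \<in> carrier G \<Longrightarrow> [B g = 0] (mod n) \<Longrightarrow> B g = 0"
  using B_eqI n_gt by simp
lemma AB_eq: "g \<in> carrier G \<Longrightarrow> h \<in> carrier G \<Longrightarrow> [A g = A h] (mod n) \<Longrightarrow> A g = A h"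
  using A_eqI A_range by blast
lemma BB_eq: "g \<in> carrier G \<Longrightarrow> h \<in> carrier G \<Longrightarrow> [B g = B h] (mod n) \<Longrightarrow> B g = B h"
  using B_eqI B_range by blast

lemma A_pow: "g \<in> carrier G \<Longrightarrow> [A (g [^] (k::nat)) = A g ^ k] (mod n)"
proof (induction k)
  case 0 then show ?case using A_one by simp
next
  case (Suc k)
  have "A (g [^] Suc k) = A (g \<otimes> g [^] k)" using Suc.prems nat_pow_Suc2 by metis
  also have "[\<dots> = A g * A (g [^] k)] (mod n)" using Suc.prems by (simp add: A_mult)
  also have "[A g * A (g [^] k) = A g * A g ^ k] (mod n)" using Suc by (intro cong_mult cong_refl)
  finally show ?case by simp
qed

lemma B_pow: "g \<in> carrier G \<Longrightarrow> [B (g [^] (k::nat)) = B g * gs (A g) k] (mod n)"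
proof (induction k)
  case 0 then show ?case using B_one by simp
next
  case (Suc k)
  have "B (g [^] Suc k) = B (g \<otimes> g [^] k)" using Suc.prems nat_pow_Suc2 by metis
  also have "[\<dots> = A g * B (g [^] k) + B g] (mod n)" using Suc.prems by (simp add: B_mult)
  also have "[A g * B (g [^] k) + B g = A g * (B g * gs (A g) k) + B g] (mod n)"
    using Suc by (intro cong_add cong_mult cong_refl)
  also have "A g * (B g * gs (A g) k) + B g = B g * gs (A g) (Suc k)" by (simp add: gs_Suc' algebra_simps)
  finally show ?case .
qed

lemma A_inv: "g \<in> carrier G \<Longrightarrow> [A g * A (inv g) = 1] (mod n)"
  using A_mult[of g "inv g"] A_one by (simp add: cong_sym)

lemma B_inv: "g \<in> carrier G \<Longrightarrow> [A g * B (inv g) + B g = 0] (mod n)"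
  using B_mult[of g "inv g"] B_one by (simp add: cong_sym)

lemma cong_ex: "[x = y] (mod n) \<Longrightarrow> \<exists>k. x = y + n * k"
  by (metis cong_iff_lin cong_sym)

lemma comm_A: "g \<in> carrier G \<Longrightarrow> h \<in> carrier G \<Longrightarrow> A (g \<otimes> h \<otimes> inv g \<otimes> inv h) = 1"
proof -
  assume g: "g \<in> carrier G" and h: "h \<in> carrier G"
  have "[A (g \<otimes> h \<otimes> inv g \<otimes> inv h) = A (g \<otimes> h \<otimes> inv g) * A (inv h)] (mod n)"
    using g h by (simp add: A_mult)
  also have "[A (g \<otimes> h \<otimes> inv g) * A (inv h) = (A (g \<otimes> h) * A (inv g)) * A (inv h)] (mod n)"
    using g h by (intro cong_mult cong_refl A_mult) auto
  also have "[(A (g \<otimes> h) * A (inv g)) * A (inv h) = ((A g * A h) * A (inv g)) * A (inv h)] (mod n)"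
    using g h by (intro cong_mult cong_refl A_mult) auto
  also have "((A g * A h) * A (inv g)) * A (inv h) = (A g * A (inv g)) * (A h * A (inv h))"
    by (simp add: algebra_simps)
  also have "[(A g * A (inv g)) * (A h * A (inv h)) = 1 * 1] (mod n)"
    using g h by (intro cong_mult A_inv)
  finally show ?thesis using g h by (intro A_eq1) auto
qed

lemma comm_B: "g \<in> carrier G \<Longrightarrow> h \<in> carrier G \<Longrightarrow>
   [B (g \<otimes> h \<otimes> inv g \<otimes> inv h) = (A g - 1) * B h + (1 - A h) * B g] (mod n)"
proof -
  assume g: "g \<in> carrier G" and h: "h \<in> carrier G"
  define al where "al = A g" define be where "be = B g" define al' where "al' = A (inv g)"
  define be' where "be' = B (inv g)"
  define a where "a = A h" define b where "b = B h"
  define b' where "b' = B (inv h)"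
  have gi: "inv g \<in> carrier G" and hi: "inv h \<in> carrier G" using g h by auto
  have "[B (g \<otimes> h \<otimes> inv g \<otimes> inv h) = A (g \<otimes> h \<otimes> inv g) * b' + B (g \<otimes> h \<otimes> inv g)] (mod n)"
    using g h unfolding b'_def by (simp add: B_mult)
  also have "[A (g \<otimes> h \<otimes> inv g) * b' + B (g \<otimes> h \<otimes> inv g) =
      (A (g \<otimes> h) * al') * b' + (A (g \<otimes> h) * be' + B (g \<otimes> h))] (mod n)"
    using g h unfolding al'_def be'_def by (intro cong_add cong_mult cong_refl A_mult B_mult) auto
  also have "[(A (g \<otimes> h) * al') * b' + (A (g \<otimes> h) * be' + B (g \<otimes> h)) =
      ((al * a) * al') * b' + ((al * a) * be' + (al * b + be))] (mod n)"
    using g h unfolding al_def a_def b_def be_def by (intro cong_add cong_mult cong_refl A_mult B_mult) auto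
  also have "((al * a) * al') * b' + ((al * a) * be' + (al * b + be)) =
      a * b' * (al * al') + a * (al * be' + be) + (al - 1) * b + (1 - a) * be + b"
    by (simp add: algebra_simps)
  also have "[a * b' * (al * al') + a * (al * be' + be) + (al - 1) * b + (1 - a) * be + b =
      a * b' * 1 + a * 0 + (al - 1) * b + (1 - a) * be + b] (mod n)"
    using g h unfolding al_def al'_def be_def be'_def
    by (intro cong_add cong_mult cong_refl A_inv B_inv)
  also have "a * b' * 1 + a * 0 + (al - 1) * b + (1 - a) * be + b = (a * b' + b) + ((al - 1) * b + (1 - a) * be)"
    by (simp add: algebra_simps)
  also have "[(a * b' + b) + ((al - 1) * b + (1 - a) * be) = 0 + ((al - 1) * b + (1 - a) * be)] (mod n)"
    using h unfolding a_def b_def b'_def by (intro cong_add cong_refl B_inv)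
  finally show ?thesis unfolding al_def be_def a_def b_def by simp
qed

lemma same_imp: assumes "g \<in> carrier G" "h \<in> carrier G" "A g = A h" "B g = B h"
  shows "inv h \<otimes> g \<in> carrier G" "A (inv h \<otimes> g) = 1" "B (inv h \<otimes> g) = 0"
proof -
  show "inv h \<otimes> g \<in> carrier G" using assms by simp
  have "[A (inv h \<otimes> g) = A (inv h) * A h] (mod n)" using assms A_mult[of "inv h" g] by simp
  also have "[A (inv h) * A h = 1] (mod n)" using A_inv[OF assms(2)] by (simp add: mult.commute)
  finally show "A (inv h \<otimes> g) = 1" using assms by (intro A_eq1) auto
  have "[B (inv h \<otimes> g) = A (inv h) * B h + B (inv h)] (mod n)" using assms B_mult[of "inv h" g] by simp
  also have "[A (inv h) * B h + B (inv h) = 0] (mod n)"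
    using B_mult[of "inv h" h] assms B_one by (simp add: cong_sym)
  finally show "B (inv h \<otimes> g) = 0" using assms by (intro B_eq0) auto
qed

lemma A_coprime: "g \<in> carrier G \<Longrightarrow> coprime (A g) n"
proof -
  assume g: "g \<in> carrier G"
  obtain k where "A g * A (inv g) = 1 + n * k" using cong_ex[OF A_inv[OF g]] by blast
  hence "A g * A (inv g) + n * (- k) = 1" by simp
  thus ?thesis by (metis coprimeI dvd_add dvd_mult2 dvd_mult)
qed

end

lemma fermat_int:
  fixes p :: nat and a :: int
  assumes "prime p" "\<not> int p dvd a"
  shows "[a ^ (p - 1) = 1] (mod int p)"
proof -
  define a0 where "a0 = nat (a mod int p)"
  have p0: "int p > 0" using assms(1) prime_gt_0_nat by simp
  have ia0: "int a0 = a mod int p" unfolding a0_def using p0 by simp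
  have "\<not> p dvd a0"
  proof
    assume "p dvd a0"
    hence "int p dvd int a0" by simp
    hence "int p dvd a mod int p" using ia0 by simp
    thus False using assms(2) by (simp add: dvd_mod_iff)
  qed
  hence "[a0 ^ (p - 1) = 1] (mod p)" using fermat_theorem assms(1) by blast
  hence "[int a0 ^ (p - 1) = 1] (mod int p)" by (metis cong_int_iff of_nat_1 of_nat_power)
  moreover have "[int a0 = a] (mod int p)" using ia0 by (simp add: cong_def)
  hence "[int a0 ^ (p - 1) = a ^ (p - 1)] (mod int p)" by (rule cong_pow)
  ultimately show ?thesis by (meson cong_sym cong_trans)
qed

lemma fermat_int_mult:
  fixes p :: nat and a :: int
  assumes "prime p" "\<not> int p dvd a"
  shows "int p dvd a ^ ((p - 1) * m) - 1"
proof -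
  have "[a ^ (p - 1) = 1] (mod int p)" using fermat_int assms by blast
  hence "[(a ^ (p - 1)) ^ m = 1 ^ m] (mod int p)" by (rule cong_pow)
  thus ?thesis by (simp add: power_mult cong_iff_dvd_diff dvd_diff_commute)
qed

lemma fermat_ppow:
  fixes p :: nat and a :: int
  assumes "prime p" "\<not> int p dvd a"
  shows "[a ^ (p ^ j) = a] (mod int p)"
proof (induction j)
  case 0 then show ?case by simp
next
  case (Suc j)
  have "a ^ (p ^ Suc j) = (a ^ (p ^ j)) ^ p" by (simp add: power_mult[symmetric] algebra_simps)
  also have "[\<dots> = a ^ p] (mod int p)" using Suc by (rule cong_pow)
  also have "a ^ p = a * a ^ (p - 1)" using assms(1) prime_gt_0_nat
    by (metis Suc_diff_1 power_Suc)
  also have "[a * a ^ (p - 1) = a * 1] (mod int p)" using fermat_int[OF assms] by (intro cong_mult cong_refl)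
  finally show ?case by simp
qed

lemma dvd_pow_sub1:
  fixes a b :: int
  assumes "b dvd a - 1" shows "b dvd a ^ k - 1"
  using gs_pow[of a k] assms by simp

locale twoaff = X: affrep G n A1 B1 + Y: affrep G n A2 B2 for G (structure) and n A1 B1 A2 B2 +
  fixes p e :: nat
  assumes p_prime: "prime p" and p_odd: "odd p" and e_ge: "e \<ge> 1" and n_def: "n = int p ^ e"
  and faithful: "g \<in> carrier G \<Longrightarrow> A1 g = 1 \<Longrightarrow> B1 g = 0 \<Longrightarrow> g = \<one>"
  and surj2: "\<And>b. 0 \<le> b \<Longrightarrow> b < n \<Longrightarrow> \<exists>g\<in>carrier G. B2 g = b"
begin

lemma p_gt: "int p > 1" using p_prime prime_gt_1_nat by simp
lemma pnu: "\<not> int p dvd 1" using p_gt by (simp add: zdvd_not_zless)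
lemma p_dvd_n: "int p dvd n" using e_ge n_def by (simp add: dvd_power)
lemma pe1_dvd_n: "int p ^ (e - 1) dvd n" using n_def by (simp add: le_imp_power_dvd)
lemma n_eq: "n = int p ^ (e - 1) * int p" using n_def e_ge by (metis Suc_diff_le diff_Suc_1 power_Suc2)
lemma prime_int: "prime (int p)" using p_prime by simp

lemma cong_n_p: "[x = y] (mod n) \<Longrightarrow> [x = y] (mod int p)"
  using p_dvd_n cong_dvd_modulus by blast

lemma n_dvd_p: "n dvd x \<Longrightarrow> int p dvd x" using p_dvd_n dvd_trans by blast

lemma prime_dvd_mult: "int p dvd x * y \<Longrightarrow> int p dvd x \<or> int p dvd y"
  using prime_int by (simp add: prime_dvd_mult_iff)

lemma inj1: assumes "g \<in> carrier G" "h \<in> carrier G" "A1 g = A1 h" "B1 g = B1 h" shows "g = h"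
proof -
  have "inv h \<otimes> g = \<one>" using X.same_imp[OF assms] faithful by blast
  thus ?thesis using assms by (metis X.inv_equality X.inv_inv X.inv_closed)
qed

lemma A1_not_p: "g \<in> carrier G \<Longrightarrow> \<not> int p dvd A1 g"
proof
  assume g: "g \<in> carrier G" and "int p dvd A1 g"
  moreover have "coprime (A1 g) n" using X.A_coprime g by blast
  ultimately have "int p dvd 1" using p_dvd_n by (meson coprime_common_divisor)
  thus False using pnu by blast
qed

lemma A2_not_p: "g \<in> carrier G \<Longrightarrow> \<not> int p dvd A2 g"
proof
  assume g: "g \<in> carrier G" and "int p dvd A2 g"
  moreover have "coprime (A2 g) n" using Y.A_coprime g by blast
  ultimately have "int p dvd 1" using p_dvd_n by (meson coprime_common_divisor)
  thus False using pnu by blast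
qed

lemma P1_pow: assumes g: "g \<in> carrier G" and pa: "int p dvd A1 g - 1"
  shows "g [^] (p ^ e) = \<one>"
proof -
  have "int p ^ (1 + e) dvd A1 g ^ (p ^ e) - 1"
    using pow_ppow_dvd[OF p_prime p_odd pa, of 1 e] pa by simp
  hence "n dvd A1 g ^ (p ^ e) - 1" unfolding n_def by (meson dvd_trans le_add2 le_imp_power_dvd)
  hence "[A1 (g [^] (p ^ e)) = 1] (mod n)" using X.A_pow[OF g, of "p^e"]
    by (meson cong_iff_dvd_diff cong_sym cong_trans)
  hence a: "A1 (g [^] (p ^ e)) = 1" using g by (intro X.A_eq1) auto
  obtain u where u: "gs (A1 g) (p ^ e) = int p ^ e * u" using gs_ppow[OF p_prime p_odd pa] by blast
  have "[B1 (g [^] (p ^ e)) = B1 g * gs (A1 g) (p ^ e)] (mod n)" using X.B_pow[OF g] by blast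
  moreover have "[B1 g * gs (A1 g) (p ^ e) = 0] (mod n)" using u n_def by (simp add: cong_0_iff)
  ultimately have "B1 (g [^] (p ^ e)) = 0" using g by (meson X.B_eq0 cong_trans X.nat_pow_closed)
  thus ?thesis using faithful a g by simp
qed

lemma P1_P2: assumes g: "g \<in> carrier G" and pa: "int p dvd A1 g - 1"
  shows "int p dvd A2 g - 1"
proof -
  have "[A2 (g [^] (p ^ e)) = A2 g ^ (p ^ e)] (mod n)" using Y.A_pow[OF g] by blast
  hence "[1 = A2 g ^ (p ^ e)] (mod n)" using P1_pow[OF g pa] Y.A_one by simp
  hence "[1 = A2 g ^ (p ^ e)] (mod int p)" by (rule cong_n_p)
  moreover have "[A2 g ^ (p ^ e) = A2 g] (mod int p)" using fermat_ppow[OF p_prime A2_not_p[OF g]] by blast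
  ultimately have "[1 = A2 g] (mod int p)" by (rule cong_trans)
  thus ?thesis by (simp add: cong_iff_dvd_diff dvd_diff_commute)
qed

lemma cong_p_dvd: "[x = y] (mod int p) \<Longrightarrow> int p dvd x - y"
  by (simp add: cong_iff_dvd_diff dvd_diff_commute)

lemma exists_g: "\<exists>g\<in>carrier G. int p dvd A1 g - 1 \<and> \<not> int p dvd B2 g"
proof (rule ccontr)
  assume "\<not> ?thesis"
  hence H: "\<And>g. g \<in> carrier G \<Longrightarrow> int p dvd A1 g - 1 \<Longrightarrow> int p dvd B2 g" by blast
  have key: "B2 g mod int p = B2 h mod int p"
    if g: "g \<in> carrier G" and h: "h \<in> carrier G" and eq: "A1 g mod int p = A1 h mod int p" for g h
  proof -
    define k where "k = inv h \<otimes> g"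
    have k: "k \<in> carrier G" using g h unfolding k_def by simp
    have "[A1 k = A1 (inv h) * A1 g] (mod n)" using X.A_mult g h unfolding k_def by simp
    hence "[A1 k = A1 (inv h) * A1 g] (mod int p)" by (rule cong_n_p)
    also have "[A1 (inv h) * A1 g = A1 (inv h) * A1 h] (mod int p)" using eq
      by (intro cong_mult cong_refl) (simp add: cong_def)
    also have "[A1 (inv h) * A1 h = 1] (mod int p)" using cong_n_p[OF X.A_inv[OF h]] by (simp add: mult.commute)
    finally have "int p dvd A1 k - 1" by (rule cong_p_dvd)
    hence pk: "int p dvd B2 k" using H k by blast
    have "g = h \<otimes> k" using g h unfolding k_def by (simp add: X.m_assoc[symmetric])
    hence "[B2 g = A2 h * B2 k + B2 h] (mod n)" using Y.B_mult[OF h k] by simp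
    hence "[B2 g = A2 h * B2 k + B2 h] (mod int p)" by (rule cong_n_p)
    also have "[A2 h * B2 k + B2 h = A2 h * 0 + B2 h] (mod int p)" using pk
      by (intro cong_add cong_mult cong_refl) (simp add: cong_0_iff)
    finally show "B2 g mod int p = B2 h mod int p" by (simp add: cong_def)
  qed
  define S where "S = (\<lambda>g. B2 g mod int p) ` carrier G"
  define T where "T = (\<lambda>g. A1 g mod int p) ` carrier G"
  define F where "F = (\<lambda>r. B2 (SOME g. g \<in> carrier G \<and> A1 g mod int p = r) mod int p)"
  have ST: "S \<subseteq> F ` T"
  proof
    fix s assume "s \<in> S"
    then obtain g where g: "g \<in> carrier G" and s: "s = B2 g mod int p" unfolding S_def by blast
    define r where "r = A1 g mod int p"
    have "\<exists>h. h \<in> carrier G \<and> A1 h mod int p = r" using g unfolding r_def by blast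
    hence "(SOME h. h \<in> carrier G \<and> A1 h mod int p = r) \<in> carrier G \<and>
        A1 (SOME h. h \<in> carrier G \<and> A1 h mod int p = r) mod int p = r" by (rule someI_ex)
    hence "F r = s" using key[OF _ g] unfolding F_def s r_def by metis
    moreover have "r \<in> T" unfolding T_def r_def using g by blast
    ultimately show "s \<in> F ` T" by blast
  qed
  have T1: "T \<subseteq> {1..<int p}"
  proof
    fix r assume "r \<in> T"
    then obtain g where g: "g \<in> carrier G" and r: "r = A1 g mod int p" unfolding T_def by blast
    have "r \<noteq> 0" using A1_not_p[OF g] r by (simp add: dvd_eq_mod_eq_0)
    moreover have "0 \<le> r" "r < int p" using r p_gt by auto
    ultimately show "r \<in> {1..<int p}" by simp
  qed
  have S0: "{0..<int p} \<subseteq> S"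
  proof
    fix r assume r: "r \<in> {0..<int p}"
    have "int p \<le> n" using p_dvd_n X.n_gt by (simp add: zdvd_imp_le)
    then obtain g where g: "g \<in> carrier G" "B2 g = r" using surj2[of r] r by auto
    hence "B2 g mod int p = r" using r by simp
    thus "r \<in> S" unfolding S_def using g by force
  qed
  have fT: "finite T" using T1 finite_subset by blast
  hence fFT: "finite (F ` T)" by blast
  have fS: "finite S" using ST fFT finite_subset by blast
  have "card {0..<int p} \<le> card S" using S0 fS by (rule card_mono[rotated])
  also have "\<dots> \<le> card (F ` T)" using ST fFT by (rule card_mono[rotated])
  also have "\<dots> \<le> card T" using fT by (rule card_image_le)
  also have "\<dots> \<le> card {1..<int p}" using T1 by (intro card_mono) auto
  finally show False using p_gt by simp
qed

definition g0 where "g0 = (SOME g. g \<in> carrier G \<and> int p dvd A1 g - 1 \<and> \<not> int p dvd B2 g)"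

lemma g0: "g0 \<in> carrier G" "int p dvd A1 g0 - 1" "\<not> int p dvd B2 g0" "int p dvd A2 g0 - 1"
proof -
  have "g0 \<in> carrier G \<and> int p dvd A1 g0 - 1 \<and> \<not> int p dvd B2 g0"
    unfolding g0_def using exists_g by (metis (no_types, lifting) someI_ex)
  thus "g0 \<in> carrier G" "int p dvd A1 g0 - 1" "\<not> int p dvd B2 g0" by auto
  thus "int p dvd A2 g0 - 1" using P1_P2 by blast
qed

definition z where "z = g0 [^] (p ^ (e - 1))"

lemma z_carr: "z \<in> carrier G" unfolding z_def using g0 by simp

lemma z_A: "A1 z = 1" "A2 z = 1"
proof -
  have "int p ^ (1 + (e - 1)) dvd A1 g0 ^ (p ^ (e - 1)) - 1"
    using pow_ppow_dvd[OF p_prime p_odd g0(2), of 1] g0(2) by simp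
  hence "n dvd A1 g0 ^ (p ^ (e - 1)) - 1" using e_ge n_def by simp
  hence "[A1 z = 1] (mod n)" using X.A_pow[OF g0(1), of "p^(e-1)"] unfolding z_def
    by (meson cong_iff_dvd_diff cong_sym cong_trans)
  thus "A1 z = 1" using z_carr X.A_eq1 by blast
  have "int p ^ (1 + (e - 1)) dvd A2 g0 ^ (p ^ (e - 1)) - 1"
    using pow_ppow_dvd[OF p_prime p_odd g0(4), of 1] g0(4) by simp
  hence "n dvd A2 g0 ^ (p ^ (e - 1)) - 1" using e_ge n_def by simp
  hence "[A2 z = 1] (mod n)" using Y.A_pow[OF g0(1), of "p^(e-1)"] unfolding z_def
    by (meson cong_iff_dvd_diff cong_sym cong_trans)
  thus "A2 z = 1" using z_carr Y.A_eq1 by blast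
qed

lemma z_B: obtains u u' where "[B1 z = B1 g0 * (int p ^ (e - 1) * u)] (mod n)"
  "[B2 z = B2 g0 * (int p ^ (e - 1) * u')] (mod n)" "\<not> int p dvd u" "\<not> int p dvd u'"
proof -
  obtain u where u: "gs (A1 g0) (p ^ (e - 1)) = int p ^ (e - 1) * u" "int p dvd u - 1"
    using gs_ppow[OF p_prime p_odd g0(2)] by blast
  obtain u' where u': "gs (A2 g0) (p ^ (e - 1)) = int p ^ (e - 1) * u'" "int p dvd u' - 1"
    using gs_ppow[OF p_prime p_odd g0(4)] by blast
  show ?thesis
  proof (rule that[of u u'])
    show "[B1 z = B1 g0 * (int p ^ (e - 1) * u)] (mod n)"
      using X.B_pow[OF g0(1), of "p^(e-1)"] u(1) unfolding z_def by simp
    show "[B2 z = B2 g0 * (int p ^ (e - 1) * u')] (mod n)"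
      using Y.B_pow[OF g0(1), of "p^(e-1)"] u'(1) unfolding z_def by simp
    show "\<not> int p dvd u" by (rule dvd_sub1_not_dvd[OF p_prime u(2)])
    show "\<not> int p dvd u'" by (rule dvd_sub1_not_dvd[OF p_prime u'(2)])
  qed
qed

lemma n_dvd_pe1: "n dvd int p ^ (e - 1) * x \<longleftrightarrow> int p dvd x"
proof -
  have "int p ^ (e - 1) \<noteq> 0" using p_gt by simp
  thus ?thesis unfolding n_eq by (simp only: dvd_mult_cancel_left) simp
qed

lemma beta: "\<not> int p dvd B1 g0"
proof
  assume pb: "int p dvd B1 g0"
  obtain u u' where uu: "[B1 z = B1 g0 * (int p ^ (e - 1) * u)] (mod n)"
    "[B2 z = B2 g0 * (int p ^ (e - 1) * u')] (mod n)" "\<not> int p dvd u" "\<not> int p dvd u'"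
    using z_B by blast
  have "n dvd B1 g0 * (int p ^ (e - 1) * u)"
    using pb n_dvd_pe1[of "B1 g0 * u"] by (simp add: algebra_simps)
  hence "[B1 z = 0] (mod n)" using uu(1) by (meson cong_0_iff cong_trans)
  hence "B1 z = 0" using z_carr X.B_eq0 by blast
  hence "z = \<one>" using faithful z_carr z_A by blast
  hence "B2 z = 0" using Y.B_one by simp
  hence "[B2 g0 * (int p ^ (e - 1) * u') = 0] (mod n)" using uu(2) by (simp add: cong_sym_eq)
  hence "n dvd B2 g0 * (int p ^ (e - 1) * u')" by (simp add: cong_0_iff)
  hence "int p dvd B2 g0 * u'" using n_dvd_pe1[of "B2 g0 * u'"] by (simp add: algebra_simps)
  thus False using prime_dvd_mult g0(3) uu(4) by blast
qed

lemma cong0_dvd: "[0 = x] (mod m) \<Longrightarrow> m dvd (x::int)"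
  by (metis cong_0_iff cong_sym)

lemma cong_pe1: "[x = y] (mod int p) \<Longrightarrow> [int p ^ (e - 1) * x = int p ^ (e - 1) * y] (mod n)"
proof -
  assume "[x = y] (mod int p)"
  hence "int p dvd x - y" by (simp add: cong_iff_dvd_diff)
  hence "n dvd int p ^ (e - 1) * (x - y)" using n_dvd_pe1 by blast
  moreover have "int p ^ (e - 1) * (x - y) = int p ^ (e - 1) * x - int p ^ (e - 1) * y"
    by (simp add: right_diff_distrib)
  ultimately show ?thesis by (simp add: cong_iff_dvd_diff)
qed

lemma Z0:
  assumes y: "y \<in> carrier G" and a1: "A1 y = 1" and pd: "int p ^ (e - 1) dvd B1 y"
    and nd: "\<not> n dvd B1 y" and a2: "A2 y = 1"
  shows "B2 y \<noteq> 0"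
proof
  assume b2: "B2 y = 0"
  obtain s where s: "B1 y = int p ^ (e - 1) * s" using pd by (elim dvdE)
  have ps: "\<not> int p dvd s" using nd s n_dvd_pe1 by simp
  obtain u u' where uu: "[B1 z = B1 g0 * (int p ^ (e - 1) * u)] (mod n)"
    "[B2 z = B2 g0 * (int p ^ (e - 1) * u')] (mod n)" "\<not> int p dvd u" "\<not> int p dvd u'"
    using z_B by blast
  define \<tau> where "\<tau> = B1 g0 * u"
  have pt: "\<not> int p dvd \<tau>" unfolding \<tau>_def using beta uu(3) prime_dvd_mult by blast
  have "coprime \<tau> (int p)" using not_dvd_coprime_int[OF p_prime pt] by (simp add: coprime_commute)
  then obtain i where i: "[\<tau> * i = 1] (mod int p)" using cong_solve_coprime_int by blast
  define m where "m = nat ((s * i) mod int p)"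
  have im: "int m = (s * i) mod int p" unfolding m_def using p_gt by simp
  have tm: "[\<tau> * int m = s] (mod int p)"
  proof -
    have "[\<tau> * int m = \<tau> * (s * i)] (mod int p)" unfolding im by (intro cong_mult cong_refl) (simp add: cong_def)
    also have "\<tau> * (s * i) = s * (\<tau> * i)" by (simp add: algebra_simps)
    also have "[s * (\<tau> * i) = s * 1] (mod int p)" using i by (intro cong_mult cong_refl)
    finally show ?thesis by simp
  qed
  have zm: "z [^] m \<in> carrier G" using z_carr by simp
  have "[A1 (z [^] m) = A1 z ^ m] (mod n)" using X.A_pow[OF z_carr] by blast
  hence A1zm: "A1 (z [^] m) = 1" using z_A zm X.A_eq1 by simp
  have "[B1 (z [^] m) = B1 z * gs (A1 z) m] (mod n)" using X.B_pow[OF z_carr] by blast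
  also have "B1 z * gs (A1 z) m = B1 z * int m" using z_A by simp
  also have "[B1 z * int m = B1 g0 * (int p ^ (e - 1) * u) * int m] (mod n)"
    using uu(1) by (intro cong_mult cong_refl)
  also have "B1 g0 * (int p ^ (e - 1) * u) * int m = int p ^ (e - 1) * (\<tau> * int m)"
    unfolding \<tau>_def by (simp add: algebra_simps)
  also have "[int p ^ (e - 1) * (\<tau> * int m) = int p ^ (e - 1) * s] (mod n)" using tm by (rule cong_pe1)
  finally have "[B1 (z [^] m) = B1 y] (mod n)" using s by simp
  hence "B1 (z [^] m) = B1 y" using zm y X.BB_eq by blast
  hence zy: "z [^] m = y" using inj1[OF zm y] A1zm a1 by simp
  have "[B2 (z [^] m) = B2 z * gs (A2 z) m] (mod n)" using Y.B_pow[OF z_carr] by blast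
  also have "B2 z * gs (A2 z) m = B2 z * int m" using z_A by simp
  also have "[B2 z * int m = B2 g0 * (int p ^ (e - 1) * u') * int m] (mod n)"
    using uu(2) by (intro cong_mult cong_refl)
  also have "B2 g0 * (int p ^ (e - 1) * u') * int m = int p ^ (e - 1) * (B2 g0 * u' * int m)"
    by (simp add: algebra_simps)
  finally have "[0 = int p ^ (e - 1) * (B2 g0 * u' * int m)] (mod n)" using zy b2 by simp
  hence "n dvd int p ^ (e - 1) * (B2 g0 * u' * int m)" by (rule cong0_dvd)
  hence "int p dvd B2 g0 * u' * int m" using n_dvd_pe1 by blast
  hence "int p dvd int m" using prime_dvd_mult g0(3) uu(4) by blast
  hence "int p dvd \<tau> * int m" by simp
  moreover have "int p dvd \<tau> * int m - s" using cong_p_dvd[OF tm] .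
  ultimately have "int p dvd \<tau> * int m - (\<tau> * int m - s)" by (rule dvd_diff)
  hence "int p dvd s" by simp
  thus False using ps by blast
qed

lemma range_dvd0: "0 \<le> x \<Longrightarrow> x < n \<Longrightarrow> n dvd x \<Longrightarrow> x = 0"
  by (metis dvd_imp_mod_0 mod_pos_pos_trivial)

lemma A1_ge1: "g \<in> carrier G \<Longrightarrow> A1 g \<ge> 1"
proof -
  assume g: "g \<in> carrier G"
  have "A1 g \<noteq> 0" using A1_not_p[OF g] by auto
  thus ?thesis using X.A_range[OF g] by simp
qed

lemma A1_ne1: "g \<in> carrier G \<Longrightarrow> A1 g \<noteq> 1 \<Longrightarrow> \<not> n dvd 1 - A1 g"
proof
  assume g: "g \<in> carrier G" and ne: "A1 g \<noteq> 1" and d: "n dvd 1 - A1 g"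
  hence "n dvd A1 g - 1" by (simp add: dvd_diff_commute)
  moreover have "0 \<le> A1 g - 1" "A1 g - 1 < n" using A1_ge1[OF g] X.A_range[OF g] by auto
  ultimately have "A1 g - 1 = 0" using range_dvd0 by blast
  thus False using ne by simp
qed

lemma coprime_n: "\<not> int p dvd x \<Longrightarrow> coprime x n"
proof -
  assume "\<not> int p dvd x"
  hence "coprime (int p) x" by (rule not_dvd_coprime_int[OF p_prime])
  hence "coprime (int p ^ e) x" by simp
  thus ?thesis unfolding n_def by (simp add: coprime_commute)
qed

lemma pe1_dvd_cancel: "n dvd x * int p \<Longrightarrow> int p ^ (e - 1) dvd x"
proof -
  assume "n dvd x * int p"
  hence "int p ^ (e - 1) * int p dvd x * int p" unfolding n_eq .
  thus ?thesis using p_gt by (simp only: dvd_mult_cancel_right) simp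
qed

lemma cong_n_dvd_pe1: "[x = y] (mod n) \<Longrightarrow> int p ^ (e - 1) dvd y \<Longrightarrow> int p ^ (e - 1) dvd x"
proof -
  assume c: "[x = y] (mod n)" and d: "int p ^ (e - 1) dvd y"
  have "n dvd x - y" using c by (simp add: cong_iff_dvd_diff)
  hence "int p ^ (e - 1) dvd x - y" using pe1_dvd_n dvd_trans by blast
  hence "int p ^ (e - 1) dvd (x - y) + y" using d by (rule dvd_add)
  thus ?thesis by simp
qed

lemma pow_P1: assumes q: "q \<in> carrier G" and pa: "int p dvd A1 q - 1"
  shows "int p dvd A1 (q [^] (k::nat)) - 1"
proof -
  have "[A1 (q [^] k) = A1 q ^ k] (mod int p)" using cong_n_p[OF X.A_pow[OF q]] .
  hence "int p dvd A1 (q [^] k) - A1 q ^ k" by (simp add: cong_iff_dvd_diff)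
  moreover have "int p dvd A1 q ^ k - 1" using pa by (rule dvd_pow_sub1)
  ultimately have "int p dvd (A1 (q [^] k) - A1 q ^ k) + (A1 q ^ k - 1)" by (rule dvd_add)
  thus ?thesis by simp
qed

lemma K:
  assumes q: "q \<in> carrier G" and pa: "int p dvd A1 q - 1" and a2: "A2 q = 1" and b2: "B2 q = 0"
  shows "q = \<one>"
proof (rule ccontr)
  assume qn: "q \<noteq> \<one>"
  have qe: "q [^] (p ^ e) = \<one>" using P1_pow[OF q pa] .
  define j0 where "j0 = (LEAST j. q [^] (p ^ j) = \<one>)"
  have j0: "q [^] (p ^ j0) = \<one>" unfolding j0_def using qe by (rule LeastI)
  have j0ne: "j0 \<noteq> 0"
  proof
    assume "j0 = 0"
    hence "q [^] (1::nat) = \<one>" using j0 by simp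
    thus False using qn q by simp
  qed
  define q' where "q' = q [^] (p ^ (j0 - 1))"
  have q'c: "q' \<in> carrier G" unfolding q'_def using q by simp
  have q'n: "q' \<noteq> \<one>"
  proof
    assume "q' = \<one>"
    hence "j0 \<le> j0 - 1" unfolding q'_def j0_def by (rule Least_le)
    thus False using j0ne by simp
  qed
  have q'p: "q' [^] p = \<one>"
  proof -
    have "q' [^] p = q [^] (p ^ (j0 - 1) * p)" unfolding q'_def using q by (simp add: X.nat_pow_pow)
    also have "p ^ (j0 - 1) * p = p ^ j0" using j0ne by (metis Suc_diff_1 neq0_conv power_Suc2)
    finally show ?thesis using j0 by simp
  qed
  have pa': "int p dvd A1 q' - 1" unfolding q'_def using pow_P1[OF q pa] .
  have "[A2 q' = A2 q ^ (p ^ (j0 - 1))] (mod n)" unfolding q'_def using Y.A_pow[OF q] .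
  hence a2': "A2 q' = 1" using a2 q'c Y.A_eq1 by simp
  have "[B2 q' = B2 q * gs (A2 q) (p ^ (j0 - 1))] (mod n)" unfolding q'_def using Y.B_pow[OF q] .
  hence b2': "B2 q' = 0" using b2 q'c Y.B_eq0 by simp
  define a' where "a' = A1 q'"
  define b' where "b' = B1 q'"
  have "[A1 (q' [^] p) = a' ^ p] (mod n)" unfolding a'_def using X.A_pow[OF q'c] .
  hence ca: "[1 = a' ^ p] (mod n)" using q'p X.A_one by simp
  have "[B1 (q' [^] p) = b' * gs a' p] (mod n)" unfolding a'_def b'_def using X.B_pow[OF q'c] .
  hence cb: "[0 = b' * gs a' p] (mod n)" using q'p X.B_one by simp
  obtain u where u: "gs a' (p ^ 1) = int p ^ 1 * u" "int p dvd u - 1"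
    using gs_ppow[OF p_prime p_odd pa'[folded a'_def]] by blast
  have cu: "coprime (int p ^ (e - 1)) u"
    using not_dvd_coprime_int[OF p_prime dvd_sub1_not_dvd[OF p_prime u(2)]] by simp
  have "n dvd b' * gs a' p" using cb by (rule cong0_dvd)
  hence "n dvd (b' * u) * int p" using u(1) by (simp add: algebra_simps)
  hence "int p ^ (e - 1) dvd b' * u" by (rule pe1_dvd_cancel)
  hence pb': "int p ^ (e - 1) dvd b'" using cu by (simp add: coprime_dvd_mult_left_iff)
  have "n dvd a' ^ p - 1" using ca by (simp add: cong_iff_dvd_diff dvd_diff_commute)
  hence "n dvd ((a' - 1) * u) * int p" using gs_pow[of a' p] u(1) by (simp add: algebra_simps)
  hence "int p ^ (e - 1) dvd (a' - 1) * u" by (rule pe1_dvd_cancel)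
  hence pa'1: "int p ^ (e - 1) dvd a' - 1" using cu by (simp add: coprime_dvd_mult_left_iff)
  show False
  proof (cases "a' = 1")
    case True
    have "B1 q' \<noteq> 0" using faithful q'c q'n True unfolding a'_def by blast
    hence "\<not> n dvd B1 q'" using range_dvd0 X.B_range[OF q'c] by blast
    hence "B2 q' \<noteq> 0" using Z0[OF q'c True[unfolded a'_def] pb'[unfolded b'_def] _ a2'] by blast
    thus False using b2' by simp
  next
    case False
    define c where "c = g0 \<otimes> q' \<otimes> inv g0 \<otimes> inv q'"
    have cc: "c \<in> carrier G" unfolding c_def using g0(1) q'c by simp
    have a1c: "A1 c = 1" unfolding c_def using X.comm_A g0(1) q'c by blast
    have a2c: "A2 c = 1" unfolding c_def using Y.comm_A g0(1) q'c by blast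
    have "[B2 c = (A2 g0 - 1) * B2 q' + (1 - A2 q') * B2 g0] (mod n)"
      unfolding c_def using Y.comm_B g0(1) q'c by blast
    hence b2c: "B2 c = 0" using b2' a2' cc Y.B_eq0 by simp
    have "[B1 c = (A1 g0 - 1) * b' + (1 - a') * B1 g0] (mod n)"
      unfolding c_def a'_def b'_def using X.comm_B g0(1) q'c by blast
    moreover have "[(A1 g0 - 1) * b' + (1 - a') * B1 g0 = 0 + (1 - a') * B1 g0] (mod n)"
    proof -
      have "int p ^ (e - 1) * int p dvd b' * (A1 g0 - 1)" using pb' g0(2) by (rule mult_dvd_mono)
      hence "n dvd (A1 g0 - 1) * b'" unfolding n_eq by (simp add: algebra_simps)
      thus ?thesis by (intro cong_add cong_refl) (simp add: cong_0_iff)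
    qed
    ultimately have cB: "[B1 c = (1 - a') * B1 g0] (mod n)" by (metis add_0 cong_trans)
    have "int p ^ (e - 1) dvd 1 - a'" using pa'1 by (simp add: dvd_diff_commute)
    hence "int p ^ (e - 1) dvd (1 - a') * B1 g0" by simp
    hence pdc: "int p ^ (e - 1) dvd B1 c" using cong_n_dvd_pe1[OF cB] by blast
    have ndc: "\<not> n dvd B1 c"
    proof
      assume "n dvd B1 c"
      hence "n dvd (1 - a') * B1 g0" using cB by (metis cong_dvd_iff)
      hence "n dvd 1 - a'" using coprime_n[OF beta] by (simp add: coprime_commute coprime_dvd_mult_left_iff)
      thus False using A1_ne1[OF q'c] False unfolding a'_def by blast
    qed
    have "B2 c \<noteq> 0" using Z0[OF cc a1c pdc ndc a2c] .
    thus False using b2c by simp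
  qed
qed

lemma K':
  assumes w: "w \<in> carrier G" and b1: "B1 w = 0" and a2: "A2 w = 1"
  shows "B2 w = 0"
proof (rule ccontr)
  assume d0: "B2 w \<noteq> 0"
  define d where "d = B2 w"
  have pnu': "\<not> is_unit (int p)" using pnu by simp
  have dn0: "d \<noteq> 0" using d0 unfolding d_def .
  define v where "v = multiplicity (int p) d"
  have vd: "int p ^ v dvd d" unfolding v_def by (rule multiplicity_dvd)
  have vnd: "\<not> int p ^ Suc v dvd d"
    using power_dvd_iff_le_multiplicity[OF dn0 pnu', of "Suc v"] unfolding v_def by simp
  have ve: "v < e"
  proof (rule ccontr)
    assume "\<not> v < e"
    hence "n dvd int p ^ v" unfolding n_def by (simp add: le_imp_power_dvd)
    hence "n dvd d" using vd dvd_trans by blast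
    hence "d = 0" using range_dvd0 Y.B_range[OF w] unfolding d_def by blast
    thus False using dn0 by simp
  qed
  obtain d' where d': "d = int p ^ v * d'" using vd by (elim dvdE)
  have pd': "\<not> int p dvd d'"
  proof
    assume "int p dvd d'"
    then obtain d'' where "d' = int p * d''" by (elim dvdE)
    hence "d = int p ^ Suc v * d''" using d' by simp
    thus False using vnd by simp
  qed
  have "\<not> int p dvd int p - 1"
  proof
    assume "int p dvd int p - 1"
    hence "int p dvd int p - (int p - 1)" by (rule dvd_diff[OF dvd_refl])
    hence "int p dvd 1" by simp
    thus False using pnu by blast
  qed
  hence "coprime (int p - 1) n" using coprime_n by blast
  then obtain x where x: "[(int p - 1) * x = 1] (mod n)" using cong_solve_coprime_int by blast
  define x' where "x' = nat (x mod n)"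
  have ix': "int x' = x mod n" unfolding x'_def using X.n_gt by simp
  have x'c: "[(int p - 1) * int x' = 1] (mod n)"
  proof -
    have "[(int p - 1) * int x' = (int p - 1) * x] (mod n)" unfolding ix'
      by (intro cong_mult cong_refl) (simp add: cong_def)
    thus ?thesis using x by (rule cong_trans)
  qed
  define k where "k = (p - 1) * x' * p ^ (e - 1 - v)"
  define z' where "z' = w [^] k"
  have z'c: "z' \<in> carrier G" unfolding z'_def using w by simp
  have "[A1 z' = A1 w ^ k] (mod int p)" unfolding z'_def using cong_n_p[OF X.A_pow[OF w]] .
  moreover have "int p dvd A1 w ^ k - 1" unfolding k_def mult.assoc
    using fermat_int_mult[OF p_prime A1_not_p[OF w]] .
  ultimately have "int p dvd (A1 z' - A1 w ^ k) + (A1 w ^ k - 1)"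
    by (intro dvd_add) (simp_all add: cong_iff_dvd_diff)
  hence pz': "int p dvd A1 z' - 1" by simp
  have "[B1 z' = B1 w * gs (A1 w) k] (mod n)" unfolding z'_def using X.B_pow[OF w] .
  hence b1z: "B1 z' = 0" using b1 z'c X.B_eq0 by simp
  have b2z: "[B2 z' = int p ^ (e - 1) * d'] (mod n)"
  proof -
    have "[B2 z' = B2 w * gs (A2 w) k] (mod n)" unfolding z'_def using Y.B_pow[OF w] .
    also have "B2 w * gs (A2 w) k = d * int k" using a2 unfolding d_def by simp
    also have "d * int k = int p ^ (e - 1) * (d' * ((int p - 1) * int x'))"
    proof -
      have ik: "int k = (int p - 1) * int x' * int p ^ (e - 1 - v)" unfolding k_def
        using p_gt by (simp add: of_nat_diff)
      have pv: "int p ^ v * int p ^ (e - 1 - v) = int p ^ (e - 1)" using ve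
        by (simp add: power_add[symmetric])
      have "d * int k = (int p ^ v * int p ^ (e - 1 - v)) * (d' * ((int p - 1) * int x'))"
        unfolding d' ik by (simp only: mult.assoc mult.commute mult.left_commute)
      thus ?thesis unfolding pv .
    qed
    also have "[int p ^ (e - 1) * (d' * ((int p - 1) * int x')) = int p ^ (e - 1) * (d' * 1)] (mod n)"
      using cong_n_p[OF x'c] by (intro cong_pe1 cong_mult cong_refl)
    finally show ?thesis by simp
  qed
  define c where "c = g0 \<otimes> z' \<otimes> inv g0 \<otimes> inv z'"
  have cc: "c \<in> carrier G" unfolding c_def using g0(1) z'c by simp
  have a1c: "A1 c = 1" unfolding c_def using X.comm_A g0(1) z'c by blast
  have a2z: "A2 z' = 1"
  proof -
    have "[A2 z' = A2 w ^ k] (mod n)" unfolding z'_def using Y.A_pow[OF w] .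
    thus ?thesis using a2 z'c Y.A_eq1 by simp
  qed
  have "[B2 c = (A2 g0 - 1) * B2 z' + (1 - A2 z') * B2 g0] (mod n)"
    unfolding c_def using Y.comm_B g0(1) z'c by blast
  also have "(A2 g0 - 1) * B2 z' + (1 - A2 z') * B2 g0 = (A2 g0 - 1) * B2 z'" using a2z by simp
  also have "[(A2 g0 - 1) * B2 z' = (A2 g0 - 1) * (int p ^ (e - 1) * d')] (mod n)"
    using b2z by (intro cong_mult cong_refl)
  also have "[(A2 g0 - 1) * (int p ^ (e - 1) * d') = 0] (mod n)"
  proof -
    have "int p ^ (e - 1) * int p dvd (int p ^ (e - 1) * d') * (A2 g0 - 1)"
      using g0(4) by (intro mult_dvd_mono) auto
    thus ?thesis unfolding n_eq by (simp add: cong_0_iff algebra_simps)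
  qed
  finally have b2c: "B2 c = 0" using cc Y.B_eq0 by blast
  have "c = \<one>" using K[OF cc _ _ b2c] a1c unfolding c_def using Y.comm_A g0(1) z'c by simp
  hence b1c: "B1 c = 0" using X.B_one by simp
  have "[B1 c = (A1 g0 - 1) * B1 z' + (1 - A1 z') * B1 g0] (mod n)"
    unfolding c_def using X.comm_B g0(1) z'c by blast
  hence "[0 = (1 - A1 z') * B1 g0] (mod n)" using b1c b1z by simp
  hence "n dvd (1 - A1 z') * B1 g0" by (rule cong0_dvd)
  hence "n dvd 1 - A1 z'" using coprime_n[OF beta] by (simp add: coprime_commute coprime_dvd_mult_left_iff)
  hence "A1 z' = 1" using A1_ne1[OF z'c] by blast
  hence "z' = \<one>" using faithful z'c b1z by blast
  hence "[0 = int p ^ (e - 1) * d'] (mod n)" using b2z Y.B_one by simp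
  hence "n dvd int p ^ (e - 1) * d'" by (rule cong0_dvd)
  hence "int p dvd d'" using n_dvd_pe1 by blast
  thus False using pd' by blast
qed

lemma FPw:
  assumes w: "w \<in> carrier G" and b1: "B1 w = 0"
  shows "\<exists>y. n dvd A2 w * y + B2 w - y"
proof -
  have "\<exists>y. int p ^ e dvd A2 w * y + B2 w - y"
  proof (rule fp_crit[OF p_prime p_odd e_ge])
    fix k :: nat assume h: "int p ^ e dvd A2 w ^ k - 1"
    have wk: "w [^] k \<in> carrier G" using w by simp
    have "[B1 (w [^] k) = B1 w * gs (A1 w) k] (mod n)" using X.B_pow[OF w] .
    hence b1k: "B1 (w [^] k) = 0" using b1 wk X.B_eq0 by simp
    have "[A2 (w [^] k) = A2 w ^ k] (mod n)" using Y.A_pow[OF w] .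
    moreover have "[A2 w ^ k = 1] (mod n)" using h unfolding n_def by (simp add: cong_iff_dvd_diff)
    ultimately have a2k: "A2 (w [^] k) = 1" using wk Y.A_eq1 cong_trans by blast
    have "B2 (w [^] k) = 0" using K'[OF wk b1k a2k] .
    moreover have "[B2 (w [^] k) = B2 w * gs (A2 w) k] (mod n)" using Y.B_pow[OF w] .
    ultimately have "n dvd B2 w * gs (A2 w) k" by (simp add: cong0_dvd)
    thus "int p ^ e dvd B2 w * gs (A2 w) k" unfolding n_def .
  qed
  thus ?thesis unfolding n_def .
qed

end

context twoaff
begin

lemma G'_mult: "w \<in> carrier G \<Longrightarrow> x \<in> carrier G \<Longrightarrow> B1 w = 0 \<Longrightarrow> B1 x = 0 \<Longrightarrow> B1 (w \<otimes> x) = 0"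
proof -
  assume w: "w \<in> carrier G" and x: "x \<in> carrier G" and bw: "B1 w = 0" and bx: "B1 x = 0"
  have "[B1 (w \<otimes> x) = A1 w * B1 x + B1 w] (mod n)" using X.B_mult w x by blast
  thus ?thesis using bw bx w x X.B_eq0 by simp
qed

lemma G'_inv: "x \<in> carrier G \<Longrightarrow> B1 x = 0 \<Longrightarrow> B1 (inv x) = 0"
proof -
  assume x: "x \<in> carrier G" and bx: "B1 x = 0"
  have "[A1 x * B1 (inv x) + B1 x = 0] (mod n)" using X.B_inv[OF x] .
  hence "n dvd A1 x * B1 (inv x)" using bx by (simp add: cong_0_iff)
  hence "n dvd B1 (inv x)" using X.A_coprime[OF x] by (simp add: coprime_commute coprime_dvd_mult_right_iff)
  thus ?thesis using range_dvd0 X.B_range x by blast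
qed

lemma G'_pow: "x \<in> carrier G \<Longrightarrow> B1 x = 0 \<Longrightarrow> B1 (x [^] (k::nat)) = 0"
proof -
  assume x: "x \<in> carrier G" and bx: "B1 x = 0"
  have "[B1 (x [^] k) = B1 x * gs (A1 x) k] (mod n)" using X.B_pow[OF x] .
  thus ?thesis using bx x X.B_eq0 by simp
qed

lemma cyc: "\<exists>w0\<in>carrier G. B1 w0 = 0 \<and> (\<forall>w\<in>carrier G. B1 w = 0 \<longrightarrow> (\<exists>k::nat. w = w0 [^] k))"
proof -
  define nn where "nn = p ^ e"
  have nn: "n = int nn" unfolding nn_def n_def by simp
  have nn1: "nn > 1" using X.n_gt nn by simp
  obtain r where "\<forall>k>0. residue_primroot (p ^ k) r"
    using residue_primroot_odd_prime_power_exists[OF p_prime p_odd] by blast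
  hence rp: "residue_primroot nn r" unfolding nn_def using e_ge by simp
  have gen: "bij_betw (\<lambda>i. r ^ i mod nn) {..<totient nn} (totatives nn)"
    using residue_primroot_is_generator[OF nn1 rp] .
  have rc: "coprime r nn" using rp by (simp add: residue_primroot_def coprime_commute)
  have repr: "\<exists>i. [A1 w = int r ^ i] (mod n)" if w: "w \<in> carrier G" for w
  proof -
    have "coprime (A1 w) (int nn)" using X.A_coprime[OF w] nn by simp
    moreover have "int (nat (A1 w)) = A1 w" using A1_ge1[OF w] by simp
    ultimately have "coprime (int (nat (A1 w))) (int nn)" by simp
    hence "coprime (nat (A1 w)) nn" by (simp only: coprime_int_iff)
    moreover have "1 \<le> nat (A1 w)" "nat (A1 w) \<le> nn" using A1_ge1[OF w] X.A_range[OF w] nn by auto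
    ultimately have "nat (A1 w) \<in> totatives nn" by (simp add: totatives_def)
    hence "nat (A1 w) \<in> (\<lambda>i. r ^ i mod nn) ` {..<totient nn}" using gen by (simp add: bij_betw_def)
    then obtain i where "nat (A1 w) = r ^ i mod nn" by blast
    hence "int (r ^ i mod nn) = A1 w" using A1_ge1[OF w] by simp
    hence "(int r ^ i) mod n = A1 w" using nn by (simp add: zmod_int)
    hence "[A1 w = int r ^ i] (mod n)" using X.A_range[OF w] by (simp add: cong_def)
    thus ?thesis by blast
  qed
  define D where "D = {i. \<exists>w\<in>carrier G. B1 w = 0 \<and> [A1 w = int r ^ i] (mod n)}"
  define t where "t = totient nn"
  have t0: "0 < t" unfolding t_def using nn1 by simp
  have tD: "t \<in> D"
  proof -
    have "[int (r ^ totient nn) = int 1] (mod int nn)" using euler_theorem[OF rc] by (simp only: cong_int_iff)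
    hence "[int r ^ t = 1] (mod n)" unfolding t_def nn by simp
    hence "[A1 \<one> = int r ^ t] (mod n)" using X.A_one by (simp add: cong_sym)
    thus ?thesis unfolding D_def using X.B_one by blast
  qed
  define d where "d = (LEAST i. 0 < i \<and> i \<in> D)"
  have "0 < t \<and> t \<in> D" using t0 tD by blast
  hence dD: "0 < d \<and> d \<in> D" unfolding d_def by (rule LeastI)
  then obtain w0 where w0: "w0 \<in> carrier G" "B1 w0 = 0" "[A1 w0 = int r ^ d] (mod n)"
    unfolding D_def by blast
  have "\<forall>w\<in>carrier G. B1 w = 0 \<longrightarrow> (\<exists>k::nat. w = w0 [^] k)"
  proof (intro ballI impI)
    fix w assume w: "w \<in> carrier G" and bw: "B1 w = 0"
    obtain i where i: "[A1 w = int r ^ i] (mod n)" using repr[OF w] by blast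
    define q where "q = i div d"
    define s where "s = i mod d"
    have iqs: "i = d * q + s" unfolding q_def s_def by simp
    define x where "x = w0 [^] q"
    have xc: "x \<in> carrier G" unfolding x_def using w0 by simp
    have bx: "B1 x = 0" unfolding x_def using G'_pow w0 by blast
    have ax: "[A1 x = int r ^ (d * q)] (mod n)"
    proof -
      have "[A1 x = A1 w0 ^ q] (mod n)" unfolding x_def using X.A_pow[OF w0(1)] .
      also have "[A1 w0 ^ q = (int r ^ d) ^ q] (mod n)" using w0(3) by (rule cong_pow)
      finally show ?thesis by (simp add: power_mult)
    qed
    define w' where "w' = inv x \<otimes> w"
    have w'c: "w' \<in> carrier G" unfolding w'_def using xc w by simp
    have bw': "B1 w' = 0" unfolding w'_def using G'_mult[OF _ w G'_inv[OF xc bx] bw] xc by simp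
    have aw': "[A1 w' = int r ^ s] (mod n)"
    proof -
      have "[A1 w' = A1 (inv x) * A1 w] (mod n)" unfolding w'_def using X.A_mult xc w by simp
      also have "[A1 (inv x) * A1 w = A1 (inv x) * (int r ^ (d * q) * int r ^ s)] (mod n)"
        using i iqs by (intro cong_mult cong_refl) (simp add: power_add)
      also have "A1 (inv x) * (int r ^ (d * q) * int r ^ s) = (A1 (inv x) * int r ^ (d * q)) * int r ^ s"
        by (simp add: algebra_simps)
      also have "[(A1 (inv x) * int r ^ (d * q)) * int r ^ s = (A1 (inv x) * A1 x) * int r ^ s] (mod n)"
        using ax by (intro cong_mult cong_refl) (simp add: cong_sym)
      also have "[(A1 (inv x) * A1 x) * int r ^ s = 1 * int r ^ s] (mod n)"
        using X.A_inv[OF xc] by (intro cong_mult cong_refl) (simp add: mult.commute)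
      finally show ?thesis by simp
    qed
    have s0: "s = 0"
    proof (rule ccontr)
      assume "s \<noteq> 0"
      hence "0 < s \<and> s \<in> D" unfolding D_def using w'c bw' aw' by blast
      hence "d \<le> s" unfolding d_def by (rule Least_le)
      moreover have "s < d" unfolding s_def using dD by simp
      ultimately show False by simp
    qed
    hence "[A1 w' = 1] (mod n)" using aw' by simp
    hence "A1 w' = 1" using w'c X.A_eq1 by blast
    hence "w' = \<one>" using faithful w'c bw' by blast
    moreover have "x \<otimes> w' = w" unfolding w'_def using xc w by (simp add: X.m_assoc[symmetric])
    ultimately have "w = x" using xc by simp
    thus "\<exists>k::nat. w = w0 [^] k" unfolding x_def by blast
  qed
  thus ?thesis using w0 by blast
qed

lemma main_core: "\<exists>y. \<forall>w\<in>carrier G. B1 w = 0 \<longrightarrow> n dvd A2 w * y + B2 w - y"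
proof -
  obtain w0 where w0: "w0 \<in> carrier G" "B1 w0 = 0" and gen: "\<And>w. w \<in> carrier G \<Longrightarrow> B1 w = 0 \<Longrightarrow> \<exists>k::nat. w = w0 [^] k"
    using cyc by blast
  obtain y where y: "n dvd A2 w0 * y + B2 w0 - y" using FPw[OF w0] by blast
  have "n dvd A2 w * y + B2 w - y" if w: "w \<in> carrier G" and bw: "B1 w = 0" for w
  proof -
    obtain k :: nat where k: "w = w0 [^] k" using gen[OF w bw] by blast
    define a where "a = A2 w0"
    define c where "c = B2 w0"
    have ca: "[A2 w = a ^ k] (mod n)" unfolding k a_def using Y.A_pow[OF w0(1)] .
    have cb: "[B2 w = c * gs a k] (mod n)" unfolding k a_def c_def using Y.B_pow[OF w0(1)] .
    have "[A2 w * y + B2 w - y = a ^ k * y + c * gs a k - y] (mod n)"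
      using ca cb by (intro cong_diff cong_add cong_mult cong_refl)
    also have "a ^ k * y + c * gs a k - y = gs a k * (a * y + c - y)"
    proof -
      have "a ^ k * y + c * gs a k - y = (a ^ k - 1) * y + c * gs a k" by (simp add: algebra_simps)
      also have "\<dots> = gs a k * (a * y + c - y)" unfolding gs_pow by (simp add: algebra_simps)
      finally show ?thesis .
    qed
    also have "[gs a k * (a * y + c - y) = 0] (mod n)" using y unfolding a_def c_def by (simp add: cong_0_iff)
    finally show ?thesis by (simp add: cong_0_iff)
  qed
  thus ?thesis by blast
qed

end

lemma BG_carrier: "carrier (BijGroup X) = Bij X" by (simp add: BijGroup_def)

lemma BG_mult_apply: "f \<in> Bij X \<Longrightarrow> g \<in> Bij X \<Longrightarrow> x \<in> X \<Longrightarrow> (f \<otimes>\<^bsub>BijGroup X\<^esub> g) x = f (g x)"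
  by (simp add: BijGroup_def compose_def)

lemma BG_one_apply: "x \<in> X \<Longrightarrow> \<one>\<^bsub>BijGroup X\<^esub> x = x"
  by (simp add: BijGroup_def)

lemma Bij_apply: "f \<in> Bij X \<Longrightarrow> x \<in> X \<Longrightarrow> f x \<in> X"
  using Bij_imp_funcset by blast

lemma Bij_eqI: "f \<in> Bij X \<Longrightarrow> g \<in> Bij X \<Longrightarrow> (\<And>x. x \<in> X \<Longrightarrow> f x = g x) \<Longrightarrow> f = g"
  by (rule extensionalityI[of f X g]) (auto dest: Bij_imp_extensional)

lemma BG_inv_apply: "f \<in> Bij X \<Longrightarrow> x \<in> X \<Longrightarrow> f ((inv\<^bsub>BijGroup X\<^esub> f) x) = x"
proof -
  assume f: "f \<in> Bij X" and x: "x \<in> X"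
  interpret BG: group "BijGroup X" by (rule group_BijGroup)
  have fc: "f \<in> carrier (BijGroup X)" using f by (simp add: BG_carrier)
  have ic: "inv\<^bsub>BijGroup X\<^esub> f \<in> Bij X" using BG.inv_closed[OF fc] by (simp add: BG_carrier)
  have "f \<otimes>\<^bsub>BijGroup X\<^esub> inv\<^bsub>BijGroup X\<^esub> f = \<one>\<^bsub>BijGroup X\<^esub>" using fc by simp
  hence "(f \<otimes>\<^bsub>BijGroup X\<^esub> inv\<^bsub>BijGroup X\<^esub> f) x = x" using BG_one_apply[OF x] by simp
  thus ?thesis using BG_mult_apply[OF f ic x] by simp
qed

lemma BG_pow_carrier: "f \<in> Bij X \<Longrightarrow> f [^]\<^bsub>BijGroup X\<^esub> (k::nat) \<in> Bij X"
  using monoid.nat_pow_closed[OF group.is_monoid[OF group_BijGroup], of f X k] by (simp add: BG_carrier)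

context group
begin

lemma lcos_in_lcosets: "subgroup K G \<Longrightarrow> g \<in> carrier G \<Longrightarrow> C \<in> lcosets K \<Longrightarrow> g <# C \<in> lcosets K"
proof -
  assume K: "subgroup K G" and g: "g \<in> carrier G" and C: "C \<in> lcosets K"
  then obtain a where a: "a \<in> carrier G" "C = a <# K" unfolding LCOSETS_def by blast
  have "g <# C = (g \<otimes> a) <# K" using a g subgroup.subset[OF K] by (simp add: lcos_m_assoc)
  thus ?thesis unfolding LCOSETS_def using a g by blast
qed

lemma lam_apply: "C \<in> lcosets K \<Longrightarrow> lam G K g C = g <# C"
  by (simp add: lam_def)

lemma lam_Bij: assumes K: "subgroup K G" and g: "g \<in> carrier G"
  shows "lam G K g \<in> Bij (lcosets K)"
proof -
  have ext: "lam G K g \<in> extensional (lcosets K)" unfolding lam_def by simp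
  have "bij_betw (lam G K g) (lcosets K) (lcosets K)"
  proof (rule bij_betw_byWitness[where f' = "lam G K (inv g)"])
    show "\<forall>C\<in>lcosets K. lam G K (inv g) (lam G K g C) = C"
    proof
      fix C assume C: "C \<in> lcosets K"
      have CG: "C \<subseteq> carrier G" using subgroup.lcosets_carrier[OF K is_group C] .
      have "lam G K (inv g) (lam G K g C) = inv g <# (g <# C)"
        using C lcos_in_lcosets[OF K g C] by (simp add: lam_apply)
      also have "\<dots> = C" using CG g by (simp add: lcos_m_assoc lcos_mult_one)
      finally show "lam G K (inv g) (lam G K g C) = C" .
    qed
    show "\<forall>C\<in>lcosets K. lam G K g (lam G K (inv g) C) = C"
    proof
      fix C assume C: "C \<in> lcosets K"
      have CG: "C \<subseteq> carrier G" using subgroup.lcosets_carrier[OF K is_group C] .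
      have "lam G K g (lam G K (inv g) C) = g <# (inv g <# C)"
        using C lcos_in_lcosets[OF K inv_closed[OF g] C] by (simp add: lam_apply)
      also have "\<dots> = C" using CG g by (simp add: lcos_m_assoc lcos_mult_one)
      finally show "lam G K g (lam G K (inv g) C) = C" .
    qed
    show "lam G K g ` (lcosets K) \<subseteq> lcosets K" using lcos_in_lcosets[OF K g] by (auto simp: lam_apply)
    show "lam G K (inv g) ` (lcosets K) \<subseteq> lcosets K" using lcos_in_lcosets[OF K inv_closed[OF g]] by (auto simp: lam_apply)
  qed
  thus ?thesis using ext by (simp add: Bij_def)
qed

lemma hgs_affine:
  assumes K: "subgroup K G" and H: "HGS_cyclic G K" and nn: "card (lcosets K) = nn" "nn > 1"
  shows "\<exists>\<kappa> A. bij_betw \<kappa> (lcosets K) {0..<int nn} \<and> \<kappa> K = 0 \<and>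
    (\<forall>g\<in>carrier G. 0 \<le> A g \<and> A g < int nn) \<and>
    (\<forall>g\<in>carrier G. \<forall>C\<in>lcosets K. \<kappa> (g <# C) = (A g * \<kappa> C + \<kappa> (g <# K)) mod int nn)"
proof -
  define X where "X = lcosets K"
  define BG where "BG = BijGroup X"
  interpret BG: group BG unfolding BG_def by (rule group_BijGroup)
  have BGc: "carrier BG = Bij X" unfolding BG_def by (rule BG_carrier)
  obtain N where reg: "regular_subgroup X N" and cyc: "cyclic_subgroup BG N"
    and nor: "\<And>g \<eta>. g \<in> carrier G \<Longrightarrow> \<eta> \<in> N \<Longrightarrow>
       lam G K g \<otimes>\<^bsub>BG\<^esub> \<eta> \<otimes>\<^bsub>BG\<^esub> inv\<^bsub>BG\<^esub> (lam G K g) \<in> N"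
    using H unfolding HGS_cyclic_def X_def[symmetric] BG_def[symmetric] by blast
  obtain \<sigma> where \<sigma>N: "\<sigma> \<in> N" and Ngen: "N = generate BG {\<sigma>}"
    using cyc unfolding cyclic_subgroup_def by blast
  have NS: "subgroup N BG" using reg unfolding regular_subgroup_def BG_def by blast
  have trans: "\<And>x y. x \<in> X \<Longrightarrow> y \<in> X \<Longrightarrow> \<exists>\<tau>\<in>N. \<tau> x = y"
    using reg unfolding regular_subgroup_def by blast
  have free: "\<And>\<tau> x. \<tau> \<in> N \<Longrightarrow> x \<in> X \<Longrightarrow> \<tau> x = x \<Longrightarrow> \<tau> = \<one>\<^bsub>BG\<^esub>"
    using reg unfolding regular_subgroup_def BG_def by blast
  have NB: "\<And>\<tau>. \<tau> \<in> N \<Longrightarrow> \<tau> \<in> Bij X" using subgroup.subset[OF NS] BGc by blast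
  have \<sigma>c: "\<sigma> \<in> carrier BG" using \<sigma>N subgroup.subset[OF NS] by blast
  have KG: "K \<subseteq> carrier G" using subgroup.subset[OF K] .
  define x0 where "x0 = K"
  have x0X: "x0 \<in> X" unfolding x0_def X_def LCOSETS_def using lcos_mult_one[OF KG] by force
  have finX: "finite X"
  proof (rule ccontr)
    assume "infinite X" hence "card X = 0" by simp
    thus False using nn unfolding X_def by simp
  qed
    have det: "\<tau> = \<tau>'" if t: "\<tau> \<in> N" "\<tau>' \<in> N" "\<tau> x0 = \<tau>' x0" for \<tau> \<tau>'
  proof -
    have ic: "inv\<^bsub>BG\<^esub> \<tau>' \<in> N" using subgroup.m_inv_closed[OF NS t(2)] .
    have mc: "inv\<^bsub>BG\<^esub> \<tau>' \<otimes>\<^bsub>BG\<^esub> \<tau> \<in> N" using subgroup.m_closed[OF NS ic t(1)] .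
    have "(inv\<^bsub>BG\<^esub> \<tau>' \<otimes>\<^bsub>BG\<^esub> \<tau>) x0 = (inv\<^bsub>BG\<^esub> \<tau>') (\<tau>' x0)"
      using BG_mult_apply[OF NB[OF ic] NB[OF t(1)] x0X] t(3) unfolding BG_def by simp
    also have "\<dots> = (inv\<^bsub>BG\<^esub> \<tau>' \<otimes>\<^bsub>BG\<^esub> \<tau>') x0"
      using BG_mult_apply[OF NB[OF ic] NB[OF t(2)] x0X] unfolding BG_def by simp
    also have "\<dots> = x0"
    proof -
      have "\<tau>' \<in> carrier BG" using t(2) subgroup.subset[OF NS] by blast
      hence "inv\<^bsub>BG\<^esub> \<tau>' \<otimes>\<^bsub>BG\<^esub> \<tau>' = \<one>\<^bsub>BG\<^esub>" by simp
      thus ?thesis using BG_one_apply[OF x0X] unfolding BG_def by simp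
    qed
    finally have "inv\<^bsub>BG\<^esub> \<tau>' \<otimes>\<^bsub>BG\<^esub> \<tau> = \<one>\<^bsub>BG\<^esub>" using free[OF mc x0X] by blast
    moreover have tc: "\<tau> \<in> carrier BG" "\<tau>' \<in> carrier BG" using t(1,2) subgroup.subset[OF NS] by auto
    moreover have "\<tau>' \<otimes>\<^bsub>BG\<^esub> (inv\<^bsub>BG\<^esub> \<tau>' \<otimes>\<^bsub>BG\<^esub> \<tau>) = \<tau>"
      using tc by (simp add: BG.m_assoc[symmetric])
    ultimately show ?thesis by simp
  qed
  have cardN: "card N = nn"
  proof -
    have "bij_betw (\<lambda>\<tau>. \<tau> x0) N X"
    proof (rule bij_betwI')
      show "\<And>\<tau> \<tau>'. \<tau> \<in> N \<Longrightarrow> \<tau>' \<in> N \<Longrightarrow> (\<tau> x0 = \<tau>' x0) = (\<tau> = \<tau>')" using det by blast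
      show "\<And>\<tau>. \<tau> \<in> N \<Longrightarrow> \<tau> x0 \<in> X" using Bij_apply[OF NB x0X] by blast
      show "\<exists>\<tau>\<in>N. y = \<tau> x0" if y: "y \<in> X" for y
      proof -
        obtain \<tau> where "\<tau> \<in> N" "\<tau> x0 = y" using trans[OF x0X y] by blast
        thus ?thesis by auto
      qed
    qed
    hence "card N = card X" by (rule bij_betw_same_card)
    thus ?thesis using nn unfolding X_def by simp
  qed
  have ord\<sigma>: "BG.ord \<sigma> = nn" using BG.generate_pow_card[OF \<sigma>c] Ngen cardN by simp
  have Npow: "N = {\<sigma> [^]\<^bsub>BG\<^esub> k | k. k \<in> (UNIV :: nat set)}"
    using BG.generate_pow_nat[OF \<sigma>c] ord\<sigma> nn Ngen by simp
  have pow_mod: "\<sigma> [^]\<^bsub>BG\<^esub> k = \<sigma> [^]\<^bsub>BG\<^esub> (k mod nn)" for k :: nat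
  proof -
    have e: "\<sigma> [^]\<^bsub>BG\<^esub> (nn * (k div nn)) \<otimes>\<^bsub>BG\<^esub> \<sigma> [^]\<^bsub>BG\<^esub> (k mod nn)
        = \<sigma> [^]\<^bsub>BG\<^esub> (nn * (k div nn) + k mod nn)" using BG.nat_pow_mult[OF \<sigma>c] .
    have e2: "\<sigma> [^]\<^bsub>BG\<^esub> (nn * (k div nn)) = \<one>\<^bsub>BG\<^esub>"
      using BG.nat_pow_pow[OF \<sigma>c, of nn "k div nn"] BG.pow_ord_eq_1[OF \<sigma>c] ord\<sigma> by simp
    have "nn * (k div nn) + k mod nn = k" by simp
    thus ?thesis using e e2 \<sigma>c by simp
  qed
  have powN: "\<sigma> [^]\<^bsub>BG\<^esub> k \<in> N" for k :: nat using Npow by blast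
  define ev where "ev = (\<lambda>k::nat. (\<sigma> [^]\<^bsub>BG\<^esub> k) x0)"
  have ev_bij: "bij_betw ev {0..<nn} X"
  proof (rule bij_betwI')
    fix i j assume i: "i \<in> {0..<nn}" and j: "j \<in> {0..<nn}"
    show "(ev i = ev j) = (i = j)"
    proof
      assume "ev i = ev j"
      hence eq: "\<sigma> [^]\<^bsub>BG\<^esub> i = \<sigma> [^]\<^bsub>BG\<^esub> j" using det[OF powN powN] unfolding ev_def by blast
      have inj: "inj_on (\<lambda>x. \<sigma> [^]\<^bsub>BG\<^esub> x) {0..BG.ord \<sigma> - 1}" by (rule BG.ord_inj[OF \<sigma>c])
      have ii: "i \<in> {0..BG.ord \<sigma> - 1}" and jj: "j \<in> {0..BG.ord \<sigma> - 1}" using i j ord\<sigma> by auto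
      show "i = j" using inj_onD[OF inj _ ii jj] eq by simp
    qed simp
  next
    fix k assume "k \<in> {0..<nn}"
    show "ev k \<in> X" unfolding ev_def by (rule Bij_apply[OF NB[OF powN] x0X])
  next
    fix y assume y: "y \<in> X"
    obtain \<tau> where \<tau>: "\<tau> \<in> N" "\<tau> x0 = y" using trans[OF x0X y] by blast
    then obtain k where "\<tau> = \<sigma> [^]\<^bsub>BG\<^esub> (k::nat)" using Npow by blast
    hence "y = ev (k mod nn)" using \<tau> pow_mod unfolding ev_def by simp
    moreover have "k mod nn \<in> {0..<nn}" using nn by simp
    ultimately show "\<exists>k\<in>{0..<nn}. y = ev k" by blast
  qed
  define \<kappa> where "\<kappa> = (\<lambda>C. int (inv_into {0..<nn} ev C))"
  have \<kappa>_ev: "\<kappa> (ev k) = int k" if "k < nn" for k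
    unfolding \<kappa>_def using ev_bij that by (simp add: bij_betw_inv_into_left)
  have ev_\<kappa>: "ev (nat (\<kappa> C)) = C" "nat (\<kappa> C) < nn" if "C \<in> X" for C
  proof -
    have "C \<in> ev ` {0..<nn}" using bij_betw_imp_surj_on[OF ev_bij] that by simp
    hence "inv_into {0..<nn} ev C \<in> {0..<nn}" by (rule inv_into_into)
    moreover have "ev (inv_into {0..<nn} ev C) = C" using ev_bij that
      by (simp add: bij_betw_inv_into_right)
    ultimately show "ev (nat (\<kappa> C)) = C" "nat (\<kappa> C) < nn" unfolding \<kappa>_def by auto
  qed
  have \<kappa>_bij: "bij_betw \<kappa> X {0..<int nn}"
  proof -
    have "bij_betw (inv_into {0..<nn} ev) X {0..<nn}" using bij_betw_inv_into[OF ev_bij] .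
    moreover have "bij_betw int {0..<nn} {0..<int nn}"
    proof (rule bij_betwI')
      show "\<And>x y. x \<in> {0..<nn} \<Longrightarrow> y \<in> {0..<nn} \<Longrightarrow> (int x = int y) = (x = y)" by simp
      show "\<And>x. x \<in> {0..<nn} \<Longrightarrow> int x \<in> {0..<int nn}" by simp
      show "\<exists>x\<in>{0..<nn}. y = int x" if "y \<in> {0..<int nn}" for y
        using that by (intro bexI[of _ "nat y"]) auto
    qed
    ultimately have "bij_betw (int \<circ> inv_into {0..<nn} ev) X {0..<int nn}" by (rule bij_betw_trans)
    thus ?thesis unfolding \<kappa>_def comp_def .
  qed
  have ev0: "ev 0 = x0" unfolding ev_def using BG_one_apply[OF x0X] unfolding BG_def by simp
  have \<kappa>K: "\<kappa> K = 0" using \<kappa>_ev[of 0] nn ev0 unfolding x0_def by simp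
    have Lc: "lam G K g \<in> carrier BG" if g: "g \<in> carrier G" for g
    using lam_Bij[OF K g] BGc unfolding X_def by simp
  have conj_ex: "\<exists>a. a < nn \<and> lam G K g \<otimes>\<^bsub>BG\<^esub> \<sigma> \<otimes>\<^bsub>BG\<^esub> inv\<^bsub>BG\<^esub> (lam G K g) = \<sigma> [^]\<^bsub>BG\<^esub> a"
    if g: "g \<in> carrier G" for g
  proof -
    obtain k where "lam G K g \<otimes>\<^bsub>BG\<^esub> \<sigma> \<otimes>\<^bsub>BG\<^esub> inv\<^bsub>BG\<^esub> (lam G K g) = \<sigma> [^]\<^bsub>BG\<^esub> (k::nat)"
      using nor[OF g \<sigma>N] Npow by blast
    hence "lam G K g \<otimes>\<^bsub>BG\<^esub> \<sigma> \<otimes>\<^bsub>BG\<^esub> inv\<^bsub>BG\<^esub> (lam G K g) = \<sigma> [^]\<^bsub>BG\<^esub> (k mod nn)"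
      using pow_mod by simp
    moreover have "k mod nn < nn" using nn by simp
    ultimately show ?thesis by blast
  qed
  define A where "A = (\<lambda>g. int (SOME a. a < nn \<and> lam G K g \<otimes>\<^bsub>BG\<^esub> \<sigma> \<otimes>\<^bsub>BG\<^esub> inv\<^bsub>BG\<^esub> (lam G K g) = \<sigma> [^]\<^bsub>BG\<^esub> a))"
  have A: "nat (A g) < nn" "lam G K g \<otimes>\<^bsub>BG\<^esub> \<sigma> \<otimes>\<^bsub>BG\<^esub> inv\<^bsub>BG\<^esub> (lam G K g) = \<sigma> [^]\<^bsub>BG\<^esub> nat (A g)"
    if g: "g \<in> carrier G" for g
    using someI_ex[OF conj_ex[OF g]] unfolding A_def by auto
  have conj_pow: "L \<otimes>\<^bsub>BG\<^esub> \<sigma> [^]\<^bsub>BG\<^esub> k \<otimes>\<^bsub>BG\<^esub> inv\<^bsub>BG\<^esub> L = (L \<otimes>\<^bsub>BG\<^esub> \<sigma> \<otimes>\<^bsub>BG\<^esub> inv\<^bsub>BG\<^esub> L) [^]\<^bsub>BG\<^esub> k"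
    if L: "L \<in> carrier BG" for L and k :: nat
  proof (induction k)
    case 0 then show ?case using L by simp
  next
    case (Suc k)
    have "L \<otimes>\<^bsub>BG\<^esub> \<sigma> [^]\<^bsub>BG\<^esub> Suc k \<otimes>\<^bsub>BG\<^esub> inv\<^bsub>BG\<^esub> L
        = (L \<otimes>\<^bsub>BG\<^esub> \<sigma> [^]\<^bsub>BG\<^esub> k \<otimes>\<^bsub>BG\<^esub> inv\<^bsub>BG\<^esub> L) \<otimes>\<^bsub>BG\<^esub> (L \<otimes>\<^bsub>BG\<^esub> \<sigma> \<otimes>\<^bsub>BG\<^esub> inv\<^bsub>BG\<^esub> L)"
    proof -
      have c: "\<And>Y. Y \<in> carrier BG \<Longrightarrow> inv\<^bsub>BG\<^esub> L \<otimes>\<^bsub>BG\<^esub> (L \<otimes>\<^bsub>BG\<^esub> Y) = Y"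
        using L by (simp add: BG.m_assoc[symmetric])
      show ?thesis using L \<sigma>c by (simp add: BG.m_assoc c)
    qed
    also have "\<dots> = (L \<otimes>\<^bsub>BG\<^esub> \<sigma> \<otimes>\<^bsub>BG\<^esub> inv\<^bsub>BG\<^esub> L) [^]\<^bsub>BG\<^esub> Suc k" using Suc by simp
    finally show ?case .
  qed
  have aff: "\<kappa> (g <# C) = (A g * \<kappa> C + \<kappa> (g <# K)) mod int nn" if g: "g \<in> carrier G" and C: "C \<in> X" for g C
  proof -
    define L where "L = lam G K g"
    have LB: "L \<in> Bij X" unfolding L_def using Lc[OF g] BGc by simp
    define a where "a = nat (A g)"
    define k where "k = nat (\<kappa> C)"
    define b where "b = nat (\<kappa> (g <# K))"
    have gK: "g <# K \<in> X" unfolding X_def using lcos_in_lcosets[OF K g] x0X unfolding X_def x0_def by blast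
    have Ck: "C = ev k" "k < nn" unfolding k_def using ev_\<kappa>[OF C] by auto
    have gKb: "g <# K = ev b" "b < nn" unfolding b_def using ev_\<kappa>[OF gK] by auto
    have Lx0: "L x0 = g <# K" unfolding L_def x0_def using x0X unfolding x0_def X_def by (simp add: lam_apply)
    have comm: "L \<otimes>\<^bsub>BG\<^esub> \<sigma> [^]\<^bsub>BG\<^esub> k = \<sigma> [^]\<^bsub>BG\<^esub> (a * k) \<otimes>\<^bsub>BG\<^esub> L"
    proof -
      have "L \<otimes>\<^bsub>BG\<^esub> \<sigma> [^]\<^bsub>BG\<^esub> k \<otimes>\<^bsub>BG\<^esub> inv\<^bsub>BG\<^esub> L = \<sigma> [^]\<^bsub>BG\<^esub> (a * k)"
        using conj_pow[OF Lc[OF g], of k] A(2)[OF g] \<sigma>c unfolding L_def a_def by (simp add: BG.nat_pow_pow)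
      hence "L \<otimes>\<^bsub>BG\<^esub> \<sigma> [^]\<^bsub>BG\<^esub> k \<otimes>\<^bsub>BG\<^esub> inv\<^bsub>BG\<^esub> L \<otimes>\<^bsub>BG\<^esub> L = \<sigma> [^]\<^bsub>BG\<^esub> (a * k) \<otimes>\<^bsub>BG\<^esub> L" by simp
      thus ?thesis using Lc[OF g] \<sigma>c unfolding L_def by (simp add: BG.m_assoc)
    qed
    have pB: "\<sigma> [^]\<^bsub>BG\<^esub> j \<in> Bij X" for j :: nat using NB[OF powN] .
    have "g <# C = L C" unfolding L_def using C unfolding X_def by (simp add: lam_apply)
    also have "\<dots> = L ((\<sigma> [^]\<^bsub>BG\<^esub> k) x0)" using Ck unfolding ev_def by simp
    also have "\<dots> = (L \<otimes>\<^bsub>BG\<^esub> \<sigma> [^]\<^bsub>BG\<^esub> k) x0" using BG_mult_apply[OF LB pB x0X] unfolding BG_def by simp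
    also have "\<dots> = (\<sigma> [^]\<^bsub>BG\<^esub> (a * k) \<otimes>\<^bsub>BG\<^esub> L) x0" using comm by simp
    also have "\<dots> = (\<sigma> [^]\<^bsub>BG\<^esub> (a * k)) (L x0)" using BG_mult_apply[OF pB LB x0X] unfolding BG_def by simp
    also have "\<dots> = (\<sigma> [^]\<^bsub>BG\<^esub> (a * k)) ((\<sigma> [^]\<^bsub>BG\<^esub> b) x0)" using Lx0 gKb unfolding ev_def by simp
    also have "\<dots> = (\<sigma> [^]\<^bsub>BG\<^esub> (a * k) \<otimes>\<^bsub>BG\<^esub> \<sigma> [^]\<^bsub>BG\<^esub> b) x0"
      using BG_mult_apply[OF pB pB x0X] unfolding BG_def by simp
    also have "\<dots> = ev ((a * k + b) mod nn)" unfolding ev_def using \<sigma>c pow_mod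
      by (simp add: BG.nat_pow_mult)
    finally have "\<kappa> (g <# C) = int ((a * k + b) mod nn)" using \<kappa>_ev nn by simp
    also have "\<dots> = (A g * \<kappa> C + \<kappa> (g <# K)) mod int nn"
    proof -
      have "A g = int a" unfolding a_def A_def by simp
      moreover have "\<kappa> C = int k" unfolding k_def using \<kappa>_bij C by (auto simp: bij_betw_def)
      moreover have "\<kappa> (g <# K) = int b" unfolding b_def using \<kappa>_bij gK by (auto simp: bij_betw_def)
      ultimately show ?thesis by (simp add: zmod_int)
    qed
    finally show ?thesis .
  qed
  have Ar: "0 \<le> A g \<and> A g < int nn" if "g \<in> carrier G" for g
    using A(1)[OF that] unfolding A_def by simp
  show ?thesis using \<kappa>_bij \<kappa>K aff Ar unfolding X_def by blast
qed

end

context group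
begin

lemma inv_mult_cancel_left: "x \<in> carrier G \<Longrightarrow> y \<in> carrier G \<Longrightarrow> inv x \<otimes> (x \<otimes> y) = y"
  by (simp add: m_assoc[symmetric])

lemma conj_mem: "y \<in> x <# S #> z \<longleftrightarrow> (\<exists>s\<in>S. y = x \<otimes> s \<otimes> z)"
  unfolding l_coset_def r_coset_def by blast

lemma lr_assoc: "S \<subseteq> carrier G \<Longrightarrow> h \<in> carrier G \<Longrightarrow> z \<in> carrier G \<Longrightarrow> (h <# S) #> z = h <# (S #> z)"
  unfolding l_coset_def r_coset_def by (auto simp: m_assoc subsetD)

lemma lcos_eq_self: assumes K: "subgroup K G" and g: "g \<in> carrier G"
  shows "g <# K = K \<longleftrightarrow> g \<in> K"
proof
  assume "g <# K = K"
  moreover have "g \<in> g <# K" using lcos_self[OF g K] .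
  ultimately show "g \<in> K" by simp
next
  assume gK: "g \<in> K"
  have "\<one> <# K = K" using lcos_mult_one subgroup.subset[OF K] by blast
  hence "g \<in> \<one> <# K" using gK by simp
  hence "\<one> <# K = g <# K" using l_repr_independence[OF _ one_closed K] by blast
  thus "g <# K = K" using lcos_mult_one subgroup.subset[OF K] by simp
qed

lemma conj_image: "x \<in> carrier G \<Longrightarrow> x <# S #> inv x = (\<lambda>s. x \<otimes> s \<otimes> inv x) ` S"
  using conj_mem by blast

lemma conj_card: assumes x: "x \<in> carrier G" and S: "S \<subseteq> carrier G"
  shows "card (x <# S #> inv x) = card S"
proof -
  have "inj_on (\<lambda>s. x \<otimes> s \<otimes> inv x) S"
  proof (rule inj_onI)
    fix s t assume s: "s \<in> S" and t: "t \<in> S" and e: "x \<otimes> s \<otimes> inv x = x \<otimes> t \<otimes> inv x"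
    have sc: "s \<in> carrier G" and tc: "t \<in> carrier G" using s t S by auto
    from e have "x \<otimes> s = x \<otimes> t" using x sc tc by simp
    thus "s = t" using x sc tc by simp
  qed
  thus ?thesis unfolding conj_image[OF x] by (rule card_image)
qed

lemma lcosets_sub: "subgroup K G \<Longrightarrow> C \<in> lcosets K \<Longrightarrow> C \<subseteq> carrier G"
  using subgroup.lcosets_carrier[OF _ is_group] by blast

lemma K_in_lcosets: "subgroup K G \<Longrightarrow> K \<in> lcosets K"
  unfolding LCOSETS_def using lcos_mult_one[OF subgroup.subset] by force

lemma aff_of_hgs:
  assumes K: "subgroup K G" and H: "HGS_cyclic G K" and nn: "card (lcosets K) = nn" "nn > 1"
  obtains \<kappa> A where "affrep G (int nn) A (\<lambda>g. \<kappa> (g <# K))" "bij_betw \<kappa> (lcosets K) {0..<int nn}"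
    "\<kappa> K = 0"
    "\<And>g C. g \<in> carrier G \<Longrightarrow> C \<in> lcosets K \<Longrightarrow> \<kappa> (g <# C) = (A g * \<kappa> C + \<kappa> (g <# K)) mod int nn"
proof -
  obtain \<kappa> A where kb: "bij_betw \<kappa> (lcosets K) {0..<int nn}" and k0: "\<kappa> K = 0"
    and Ar: "\<And>g. g \<in> carrier G \<Longrightarrow> 0 \<le> A g \<and> A g < int nn"
    and aff: "\<And>g C. g \<in> carrier G \<Longrightarrow> C \<in> lcosets K \<Longrightarrow> \<kappa> (g <# C) = (A g * \<kappa> C + \<kappa> (g <# K)) mod int nn"
    using hgs_affine[OF K H nn] by blast
  define B where "B = (\<lambda>g. \<kappa> (g <# K))"
  have kr: "0 \<le> \<kappa> C \<and> \<kappa> C < int nn" if "C \<in> lcosets K" for C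
    using kb that by (auto simp: bij_betw_def)
  have KX: "K \<in> lcosets K" by (rule K_in_lcosets[OF K])
  have gKX: "g <# K \<in> lcosets K" if "g \<in> carrier G" for g using lcos_in_lcosets[OF K that KX] .
  have "(1::int) \<in> \<kappa> ` (lcosets K)" using kb nn by (simp add: bij_betw_def)
  then obtain C1 where C1: "C1 \<in> lcosets K" "\<kappa> C1 = 1" by auto
  have assoc: "(g \<otimes> h) <# C = g <# (h <# C)" if "g \<in> carrier G" "h \<in> carrier G" "C \<in> lcosets K" for g h C
    using lcos_m_assoc[OF lcosets_sub[OF K that(3)] that(1,2)] by simp
  have Bm: "[B (g \<otimes> h) = A g * B h + B g] (mod int nn)" if g: "g \<in> carrier G" and h: "h \<in> carrier G" for g h
  proof -
    have "B (g \<otimes> h) = \<kappa> (g <# (h <# K))" unfolding B_def using assoc[OF g h KX] by simp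
    also have "\<dots> = (A g * B h + B g) mod int nn" unfolding B_def using aff[OF g gKX[OF h]] .
    finally show ?thesis by (simp add: cong_def)
  qed
  have Am: "[A (g \<otimes> h) = A g * A h] (mod int nn)" if g: "g \<in> carrier G" and h: "h \<in> carrier G" for g h
  proof -
    have hC1: "h <# C1 \<in> lcosets K" using lcos_in_lcosets[OF K h C1(1)] .
    have "(A (g \<otimes> h) * 1 + B (g \<otimes> h)) mod int nn = \<kappa> ((g \<otimes> h) <# C1)"
      using aff[OF _ C1(1), of "g \<otimes> h"] g h C1(2) unfolding B_def by simp
    also have "\<dots> = \<kappa> (g <# (h <# C1))" using assoc[OF g h C1(1)] by simp
    also have "\<dots> = (A g * \<kappa> (h <# C1) + B g) mod int nn" unfolding B_def using aff[OF g hC1] .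
    also have "\<kappa> (h <# C1) = (A h * 1 + B h) mod int nn" unfolding B_def using aff[OF h C1(1)] C1(2) by simp
    also have "(A g * ((A h * 1 + B h) mod int nn) + B g) mod int nn = (A g * (A h + B h) + B g) mod int nn"
      by (metis mod_add_left_eq mod_mult_right_eq mult_1_right)
    finally have "(A (g \<otimes> h) + B (g \<otimes> h)) mod int nn = (A g * (A h + B h) + B g) mod int nn"
      by simp
    hence c1: "[A (g \<otimes> h) + B (g \<otimes> h) = A g * (A h + B h) + B g] (mod int nn)" by (simp add: cong_def)
    have "[(A (g \<otimes> h) + B (g \<otimes> h)) - B (g \<otimes> h) = (A g * (A h + B h) + B g) - (A g * B h + B g)] (mod int nn)"
      using c1 Bm[OF g h] by (rule cong_diff)
    thus ?thesis by (simp add: algebra_simps)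
  qed
  have B1: "B \<one> = 0" unfolding B_def using lcos_mult_one[OF subgroup.subset[OF K]] k0 by simp
  have A1: "A \<one> = 1"
  proof -
    have "1 = \<kappa> (\<one> <# C1)" using C1 lcos_mult_one[OF lcosets_sub[OF K C1(1)]] by simp
    also have "\<dots> = (A \<one> * 1 + B \<one>) mod int nn" using aff[OF one_closed C1(1)] C1(2) unfolding B_def by simp
    finally have "A \<one> mod int nn = 1" using B1 by simp
    thus ?thesis using Ar[OF one_closed] by simp
  qed
  have "affrep G (int nn) A B"
  proof (unfold_locales)
    show "int nn > 1" using nn by simp
    show "\<And>g. g \<in> carrier G \<Longrightarrow> 0 \<le> A g \<and> A g < int nn" by (rule Ar)
    show "\<And>g. g \<in> carrier G \<Longrightarrow> 0 \<le> B g \<and> B g < int nn" unfolding B_def using kr gKX by blast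
    show "\<And>g h. g \<in> carrier G \<Longrightarrow> h \<in> carrier G \<Longrightarrow> [A (g \<otimes> h) = A g * A h] (mod int nn)" by (rule Am)
    show "\<And>g h. g \<in> carrier G \<Longrightarrow> h \<in> carrier G \<Longrightarrow> [B (g \<otimes> h) = A g * B h + B g] (mod int nn)" by (rule Bm)
    show "A \<one> = 1" by (rule A1)
    show "B \<one> = 0" by (rule B1)
  qed
  thus ?thesis using that[of A \<kappa>] kb k0 aff unfolding B_def by blast
qed

end

lemma (in group) forward:
  assumes fin: "finite (carrier G)" and G'S: "subgroup G' G"
    and core_free: "(\<Inter>g\<in>carrier G. g <# G' #> inv g) = {\<one>}"
    and p: "prime p" "odd p" "e \<ge> 1"
    and cG': "card (lcosets G') = p ^ e"
    and HG': "HGS_cyclic G G'" and HS: "subgroup H G"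
    and cH: "card (lcosets H) = card (lcosets G')"
    and HH: "HGS_cyclic G H"
  shows "\<exists>g\<in>carrier G. H = g <# G' #> inv g"
proof -
  define nn where "nn = p ^ e"
  have "p > 1" using p(1) prime_gt_1_nat by blast
  moreover have "e > 0" using p(3) by simp
  ultimately have nn1: "nn > 1" unfolding nn_def by (rule one_less_power)
  obtain \<kappa>1 A1 where aX: "affrep G (int nn) A1 (\<lambda>g. \<kappa>1 (g <# G'))"
    and kb1: "bij_betw \<kappa>1 (lcosets G') {0..<int nn}" and k01: "\<kappa>1 G' = 0"
    and aff1: "\<And>g C. g \<in> carrier G \<Longrightarrow> C \<in> lcosets G' \<Longrightarrow> \<kappa>1 (g <# C) = (A1 g * \<kappa>1 C + \<kappa>1 (g <# G')) mod int nn"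
    using cG'[folded nn_def] by (rule aff_of_hgs[OF G'S HG' _ nn1]) blast
  obtain \<kappa>2 A2 where aY: "affrep G (int nn) A2 (\<lambda>g. \<kappa>2 (g <# H))"
    and kb2: "bij_betw \<kappa>2 (lcosets H) {0..<int nn}" and k02: "\<kappa>2 H = 0"
    and aff2: "\<And>g C. g \<in> carrier G \<Longrightarrow> C \<in> lcosets H \<Longrightarrow> \<kappa>2 (g <# C) = (A2 g * \<kappa>2 C + \<kappa>2 (g <# H)) mod int nn"
    using cH[unfolded cG', folded nn_def] by (rule aff_of_hgs[OF HS HH _ nn1]) blast
  define B1 where "B1 = (\<lambda>g. \<kappa>1 (g <# G'))"
  define B2 where "B2 = (\<lambda>g. \<kappa>2 (g <# H))"
  interpret X: affrep G "int nn" A1 B1 using aX unfolding B1_def .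
  interpret Y: affrep G "int nn" A2 B2 using aY unfolding B2_def .
  have G'X: "G' \<in> lcosets G'" by (rule K_in_lcosets[OF G'S])
  have HX: "H \<in> lcosets H" by (rule K_in_lcosets[OF HS])
  have kinj1: "inj_on \<kappa>1 (lcosets G')" using kb1 by (simp add: bij_betw_def)
  have kinj2: "inj_on \<kappa>2 (lcosets H)" using kb2 by (simp add: bij_betw_def)
  have inG': "w \<in> G' \<longleftrightarrow> B1 w = 0" if w: "w \<in> carrier G" for w
  proof -
    have "w \<in> G' \<longleftrightarrow> w <# G' = G'" using lcos_eq_self[OF G'S w] by simp
    also have "\<dots> \<longleftrightarrow> \<kappa>1 (w <# G') = \<kappa>1 G'"
      using inj_on_eq_iff[OF kinj1 lcos_in_lcosets[OF G'S w G'X] G'X] by simp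
    finally show ?thesis unfolding B1_def k01 .
  qed
  have faithful: "g = \<one>" if g: "g \<in> carrier G" and a1: "A1 g = 1" and b1: "B1 g = 0" for g
  proof -
    have fixC: "g <# C = C" if C: "C \<in> lcosets G'" for C
    proof -
      have "\<kappa>1 (g <# C) = \<kappa>1 C mod int nn" using aff1[OF g C] a1 b1 unfolding B1_def by simp
      also have "\<dots> = \<kappa>1 C"
      proof -
        have "\<kappa>1 C \<in> {0..<int nn}" using kb1 C by (auto simp: bij_betw_def)
        thus ?thesis by simp
      qed
      finally show ?thesis using inj_on_eq_iff[OF kinj1 lcos_in_lcosets[OF G'S g C] C] by blast
    qed
    have "g \<in> h <# G' #> inv h" if h: "h \<in> carrier G" for h
    proof -
      have hC: "h <# G' \<in> lcosets G'" using lcos_in_lcosets[OF G'S h G'X] .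
      have "(g \<otimes> h) <# G' = h <# G'"
        using fixC[OF hC] lcos_m_assoc[OF subgroup.subset[OF G'S] g h] by simp
      moreover have "g \<otimes> h \<in> (g \<otimes> h) <# G'" using lcos_self[OF _ G'S] g h by simp
      ultimately have "g \<otimes> h \<in> h <# G'" by simp
      then obtain k where k: "k \<in> G'" "g \<otimes> h = h \<otimes> k" unfolding l_coset_def by blast
      have kc: "k \<in> carrier G" using k(1) subgroup.subset[OF G'S] by blast
      have "g = h \<otimes> k \<otimes> inv h"
      proof -
        have "g = g \<otimes> h \<otimes> inv h" using g h by (simp add: m_assoc)
        also have "\<dots> = h \<otimes> k \<otimes> inv h" using k(2) by simp
        finally show ?thesis .
      qed
      thus ?thesis using conj_mem k(1) by blast
    qed
    hence "g \<in> (\<Inter>h\<in>carrier G. h <# G' #> inv h)" by blast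
    thus ?thesis using core_free by blast
  qed
  have surj2: "\<exists>g\<in>carrier G. B2 g = b" if "0 \<le> b" "b < int nn" for b
  proof -
    have "b \<in> \<kappa>2 ` (lcosets H)" using kb2 that by (simp add: bij_betw_def)
    then obtain C where C: "C \<in> lcosets H" "b = \<kappa>2 C" by blast
    then obtain g where "g \<in> carrier G" "C = g <# H" unfolding LCOSETS_def by blast
    thus ?thesis using C unfolding B2_def by blast
  qed
  have "twoaff G (int nn) A1 B1 A2 B2 p e"
    unfolding twoaff_def twoaff_axioms_def
    using aX aY p faithful surj2 unfolding B1_def B2_def nn_def by auto
  then interpret T: twoaff G "int nn" A1 B1 A2 B2 p e .
  obtain y where y: "\<And>w. w \<in> carrier G \<Longrightarrow> B1 w = 0 \<Longrightarrow> int nn dvd A2 w * y + B2 w - y"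
    using T.main_core by blast
  obtain g0 where g0: "g0 \<in> carrier G" "B2 g0 = y mod int nn" using surj2[of "y mod int nn"] nn1 by auto
  have sub: "G' \<subseteq> g0 <# H #> inv g0"
  proof
    fix w assume wG': "w \<in> G'"
    have w: "w \<in> carrier G" using wG' subgroup.subset[OF G'S] by blast
    have b1: "B1 w = 0" using inG'[OF w] wG' by simp
    have wg: "w \<otimes> g0 \<in> carrier G" using w g0 by simp
    have "[B2 (w \<otimes> g0) = A2 w * B2 g0 + B2 w] (mod int nn)" using Y.B_mult[OF w g0(1)] .
    also have "[A2 w * B2 g0 + B2 w = A2 w * y + B2 w] (mod int nn)" using g0(2)
      by (intro cong_add cong_mult cong_refl) (simp add: cong_def)
    also have "[A2 w * y + B2 w = y] (mod int nn)" using y[OF w b1] by (simp add: cong_iff_dvd_diff)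
    also have "[y = B2 g0] (mod int nn)" using g0(2) by (simp add: cong_def)
    finally have "B2 (w \<otimes> g0) = B2 g0" using Y.BB_eq wg g0(1) by blast
    hence "(w \<otimes> g0) <# H = g0 <# H"
      using inj_on_eq_iff[OF kinj2 lcos_in_lcosets[OF HS wg HX] lcos_in_lcosets[OF HS g0(1) HX]]
      unfolding B2_def by blast
    moreover have "w \<otimes> g0 \<in> (w \<otimes> g0) <# H" using lcos_self[OF wg HS] .
    ultimately have "w \<otimes> g0 \<in> g0 <# H" by simp
    then obtain h where h: "h \<in> H" "w \<otimes> g0 = g0 \<otimes> h" unfolding l_coset_def by blast
    have "w = g0 \<otimes> h \<otimes> inv g0"
    proof -
      have "w = w \<otimes> g0 \<otimes> inv g0" using w g0 by (simp add: m_assoc)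
      also have "\<dots> = g0 \<otimes> h \<otimes> inv g0" using h(2) by simp
      finally show ?thesis .
    qed
    thus "w \<in> g0 <# H #> inv g0" using conj_mem h(1) by blast
  qed
  have cardHG: "card H = card G'"
  proof -
    have "card (lcosets H) * card H = card (lcosets G') * card G'"
      using l_lagrange[OF fin HS] l_lagrange[OF fin G'S] by simp
    moreover have "card (lcosets G') > 0" using cG' nn1 unfolding nn_def by linarith
    ultimately show ?thesis using cH by simp
  qed
  have HsubG: "H \<subseteq> carrier G" using subgroup.subset[OF HS] .
  have G'subG: "G' \<subseteq> carrier G" using subgroup.subset[OF G'S] .
  have eq1: "G' = g0 <# H #> inv g0"
  proof (rule card_subset_eq)
    show "finite (g0 <# H #> inv g0)" using fin conj_image[OF g0(1)] HsubG
      by (metis finite_imageI finite_subset)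
    show "G' \<subseteq> g0 <# H #> inv g0" by (rule sub)
    show "card G' = card (g0 <# H #> inv g0)" using conj_card[OF g0(1) HsubG] cardHG by simp
  qed
  have "H = inv g0 <# G' #> inv (inv g0)"
  proof
    show "H \<subseteq> inv g0 <# G' #> inv (inv g0)"
    proof
      fix h assume h: "h \<in> H"
      have hc: "h \<in> carrier G" using h HsubG by blast
      have "g0 \<otimes> h \<otimes> inv g0 \<in> G'" using eq1 conj_mem h by blast
      moreover have "h = inv g0 \<otimes> (g0 \<otimes> h \<otimes> inv g0) \<otimes> inv (inv g0)"
        using hc g0(1) by (simp add: m_assoc inv_mult_cancel_left)
      ultimately show "h \<in> inv g0 <# G' #> inv (inv g0)" using conj_mem by blast
    qed
    show "inv g0 <# G' #> inv (inv g0) \<subseteq> H"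
    proof
      fix x assume "x \<in> inv g0 <# G' #> inv (inv g0)"
      then obtain k where k: "k \<in> G'" "x = inv g0 \<otimes> k \<otimes> inv (inv g0)" using conj_mem by blast
      obtain h where h: "h \<in> H" "k = g0 \<otimes> h \<otimes> inv g0" using k(1) eq1 conj_mem by blast
      have hc: "h \<in> carrier G" using h HsubG by blast
      have "x = h" using k(2) h(2) hc g0(1) by (simp add: m_assoc inv_mult_cancel_left)
      thus "x \<in> H" using h by simp
    qed
  qed
  thus ?thesis using g0(1) by blast
qed

context group
begin

lemma hgs_transport:
  assumes K: "subgroup K G" and K': "subgroup K' G"
    and \<phi>: "bij_betw \<phi> (lcosets K) (lcosets K')"
    and eqv: "\<And>h C. h \<in> carrier G \<Longrightarrow> C \<in> lcosets K \<Longrightarrow> \<phi> (h <# C) = h <# \<phi> C"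
    and H: "HGS_cyclic G K"
  shows "HGS_cyclic G K'"
proof -
  define X where "X = lcosets K"
  define Y where "Y = lcosets K'"
  define BX where "BX = BijGroup X"
  define BY where "BY = BijGroup Y"
  interpret BX: group BX unfolding BX_def by (rule group_BijGroup)
  interpret BY: group BY unfolding BY_def by (rule group_BijGroup)
  have BXc: "carrier BX = Bij X" unfolding BX_def by (rule BG_carrier)
  have BYc: "carrier BY = Bij Y" unfolding BY_def by (rule BG_carrier)
  have \<phi>': "bij_betw \<phi> X Y" using \<phi> unfolding X_def Y_def .
  define \<psi> where "\<psi> = inv_into X \<phi>"
  have \<psi>: "bij_betw \<psi> Y X" unfolding \<psi>_def using bij_betw_inv_into[OF \<phi>'] .
  have \<phi>\<psi>: "\<phi> (\<psi> y) = y" if "y \<in> Y" for y unfolding \<psi>_def using \<phi>' that by (simp add: bij_betw_inv_into_right)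
  have \<psi>\<phi>: "\<psi> (\<phi> x) = x" if "x \<in> X" for x unfolding \<psi>_def using \<phi>' that by (simp add: bij_betw_inv_into_left)
  have \<psi>X: "\<psi> y \<in> X" if "y \<in> Y" for y using \<psi> that by (auto simp: bij_betw_def)
  have \<phi>Y: "\<phi> x \<in> Y" if "x \<in> X" for x using \<phi>' that by (auto simp: bij_betw_def)
  define \<Phi> where "\<Phi> = (\<lambda>\<eta>. \<lambda>y\<in>Y. \<phi> (\<eta> (\<psi> y)))"
  have \<Phi>_apply: "\<Phi> \<eta> y = \<phi> (\<eta> (\<psi> y))" if "y \<in> Y" for \<eta> y unfolding \<Phi>_def using that by simp
  have \<Phi>B: "\<Phi> \<eta> \<in> Bij Y" if \<eta>: "\<eta> \<in> Bij X" for \<eta>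
  proof -
    have "bij_betw \<eta> X X" using \<eta> by (simp add: Bij_def)
    hence "bij_betw (\<phi> \<circ> \<eta> \<circ> \<psi>) Y Y" using \<psi> \<phi>' by (meson bij_betw_trans)
    hence "bij_betw (\<Phi> \<eta>) Y Y" unfolding \<Phi>_def by (rule bij_betw_cong[THEN iffD1, rotated]) auto
    moreover have "\<Phi> \<eta> \<in> extensional Y" unfolding \<Phi>_def by simp
    ultimately show ?thesis by (simp add: Bij_def)
  qed
  have \<Phi>hom: "\<Phi> \<in> hom BX BY"
  proof (rule homI)
    show "\<Phi> \<eta> \<in> carrier BY" if "\<eta> \<in> carrier BX" for \<eta> using \<Phi>B that BXc BYc by simp
    show "\<Phi> (\<eta> \<otimes>\<^bsub>BX\<^esub> \<eta>') = \<Phi> \<eta> \<otimes>\<^bsub>BY\<^esub> \<Phi> \<eta>'" if e: "\<eta> \<in> carrier BX" "\<eta>' \<in> carrier BX" for \<eta> \<eta>'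
    proof -
      have eB: "\<eta> \<in> Bij X" "\<eta>' \<in> Bij X" using e BXc by auto
      have mB: "\<eta> \<otimes>\<^bsub>BX\<^esub> \<eta>' \<in> Bij X" using BX.m_closed[OF e] BXc by simp
      show ?thesis
      proof (rule Bij_eqI[OF \<Phi>B[OF mB]])
        show "\<Phi> \<eta> \<otimes>\<^bsub>BY\<^esub> \<Phi> \<eta>' \<in> Bij Y" using BY.m_closed \<Phi>B eB BYc by simp
        fix y assume y: "y \<in> Y"
        have "\<Phi> (\<eta> \<otimes>\<^bsub>BX\<^esub> \<eta>') y = \<phi> (\<eta> (\<eta>' (\<psi> y)))"
          using \<Phi>_apply[OF y] BG_mult_apply[OF eB \<psi>X[OF y]] unfolding BX_def by simp
        also have "\<dots> = \<phi> (\<eta> (\<psi> (\<phi> (\<eta>' (\<psi> y)))))" using \<psi>\<phi> Bij_apply[OF eB(2) \<psi>X[OF y]] by simp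
        also have "\<dots> = (\<Phi> \<eta> \<otimes>\<^bsub>BY\<^esub> \<Phi> \<eta>') y"
          using BG_mult_apply[OF \<Phi>B[OF eB(1)] \<Phi>B[OF eB(2)] y] \<Phi>_apply y
            Bij_apply[OF \<Phi>B[OF eB(2)] y] unfolding BY_def by simp
        finally show "\<Phi> (\<eta> \<otimes>\<^bsub>BX\<^esub> \<eta>') y = (\<Phi> \<eta> \<otimes>\<^bsub>BY\<^esub> \<Phi> \<eta>') y" .
      qed
    qed
  qed
  interpret hom: group_hom BX BY \<Phi> by (unfold_locales) (rule \<Phi>hom)
  obtain N where reg: "regular_subgroup X N" and cyc: "cyclic_subgroup BX N"
    and nor: "\<And>g \<eta>. g \<in> carrier G \<Longrightarrow> \<eta> \<in> N \<Longrightarrow>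
       lam G K g \<otimes>\<^bsub>BX\<^esub> \<eta> \<otimes>\<^bsub>BX\<^esub> inv\<^bsub>BX\<^esub> (lam G K g) \<in> N"
    using H unfolding HGS_cyclic_def X_def[symmetric] BX_def[symmetric] by blast
  obtain \<sigma> where \<sigma>N: "\<sigma> \<in> N" and Ngen: "N = generate BX {\<sigma>}"
    using cyc unfolding cyclic_subgroup_def by blast
  have NS: "subgroup N BX" using reg unfolding regular_subgroup_def BX_def by blast
  have trans: "\<And>x y. x \<in> X \<Longrightarrow> y \<in> X \<Longrightarrow> \<exists>\<tau>\<in>N. \<tau> x = y"
    using reg unfolding regular_subgroup_def by blast
  have free: "\<And>\<tau> x. \<tau> \<in> N \<Longrightarrow> x \<in> X \<Longrightarrow> \<tau> x = x \<Longrightarrow> \<tau> = \<one>\<^bsub>BX\<^esub>"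
    using reg unfolding regular_subgroup_def BX_def by blast
  have NB: "\<And>\<tau>. \<tau> \<in> N \<Longrightarrow> \<tau> \<in> Bij X" using subgroup.subset[OF NS] BXc by blast
  have \<sigma>c: "\<sigma> \<in> carrier BX" using \<sigma>N subgroup.subset[OF NS] by blast
  define N' where "N' = \<Phi> ` N"
  have N'S: "subgroup N' BY" unfolding N'_def by (rule hom.subgroup_img_is_subgroup[OF NS])
  have N'gen: "N' = generate BY {\<Phi> \<sigma>}"
    unfolding N'_def Ngen using hom.generate_img[of "{\<sigma>}"] \<sigma>c by simp
  have reg': "regular_subgroup Y N'"
    unfolding regular_subgroup_def
  proof (intro conjI ballI)
    show "subgroup N' (BijGroup Y)" using N'S unfolding BY_def .
  next
    fix y y' assume y: "y \<in> Y" and y': "y' \<in> Y"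
    obtain \<tau> where \<tau>: "\<tau> \<in> N" "\<tau> (\<psi> y) = \<psi> y'" using trans[OF \<psi>X[OF y] \<psi>X[OF y']] by blast
    have "\<Phi> \<tau> y = y'" using \<Phi>_apply[OF y] \<tau>(2) \<phi>\<psi>[OF y'] by simp
    thus "\<exists>\<sigma>\<in>N'. \<sigma> y = y'" unfolding N'_def using \<tau>(1) by blast
  next
    fix \<tau>' y assume \<tau>': "\<tau>' \<in> N'" and y: "y \<in> Y"
    show "\<tau>' y = y \<longrightarrow> \<tau>' = \<one>\<^bsub>BijGroup Y\<^esub>"
    proof
      assume fy: "\<tau>' y = y"
      obtain \<tau> where \<tau>: "\<tau> \<in> N" "\<tau>' = \<Phi> \<tau>" using \<tau>' unfolding N'_def by blast
      have "\<phi> (\<tau> (\<psi> y)) = \<phi> (\<psi> y)" using fy \<tau>(2) \<Phi>_apply[OF y] \<phi>\<psi>[OF y] by simp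
      hence "\<tau> (\<psi> y) = \<psi> y"
        using inj_on_eq_iff[OF bij_betw_imp_inj_on[OF \<phi>'] Bij_apply[OF NB[OF \<tau>(1)] \<psi>X[OF y]] \<psi>X[OF y]] by blast
      hence "\<tau> = \<one>\<^bsub>BX\<^esub>" using free[OF \<tau>(1) \<psi>X[OF y]] by blast
      thus "\<tau>' = \<one>\<^bsub>BijGroup Y\<^esub>" using \<tau>(2) hom.hom_one unfolding BY_def by simp
    qed
  qed
  have lamc: "lam G K g \<in> carrier BX" if "g \<in> carrier G" for g
    using lam_Bij[OF K that] BXc unfolding X_def by simp
  have lam\<Phi>: "\<Phi> (lam G K g) = lam G K' g" if g: "g \<in> carrier G" for g
  proof (rule Bij_eqI[OF \<Phi>B])
    show "lam G K g \<in> Bij X" using lam_Bij[OF K g] unfolding X_def .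
    show "lam G K' g \<in> Bij Y" using lam_Bij[OF K' g] unfolding Y_def .
    fix y assume y: "y \<in> Y"
    have "\<Phi> (lam G K g) y = \<phi> (g <# \<psi> y)" using \<Phi>_apply[OF y] \<psi>X[OF y] unfolding X_def by (simp add: lam_apply)
    also have "\<dots> = g <# \<phi> (\<psi> y)" using eqv[OF g] \<psi>X[OF y] unfolding X_def by simp
    also have "\<dots> = lam G K' g y" using \<phi>\<psi>[OF y] y unfolding Y_def by (simp add: lam_apply)
    finally show "\<Phi> (lam G K g) y = lam G K' g y" .
  qed
  have nor': "lam G K' g \<otimes>\<^bsub>BY\<^esub> \<eta>' \<otimes>\<^bsub>BY\<^esub> inv\<^bsub>BY\<^esub> (lam G K' g) \<in> N'"
    if g: "g \<in> carrier G" and \<eta>': "\<eta>' \<in> N'" for g \<eta>'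
  proof -
    obtain \<eta> where \<eta>: "\<eta> \<in> N" "\<eta>' = \<Phi> \<eta>" using \<eta>' unfolding N'_def by blast
    have \<eta>c: "\<eta> \<in> carrier BX" using \<eta>(1) subgroup.subset[OF NS] by blast
    have "\<Phi> (lam G K g \<otimes>\<^bsub>BX\<^esub> \<eta> \<otimes>\<^bsub>BX\<^esub> inv\<^bsub>BX\<^esub> (lam G K g))
        = lam G K' g \<otimes>\<^bsub>BY\<^esub> \<eta>' \<otimes>\<^bsub>BY\<^esub> inv\<^bsub>BY\<^esub> (lam G K' g)"
      using lamc[OF g] \<eta>c \<eta>(2) lam\<Phi>[OF g] by simp
    moreover have "lam G K g \<otimes>\<^bsub>BX\<^esub> \<eta> \<otimes>\<^bsub>BX\<^esub> inv\<^bsub>BX\<^esub> (lam G K g) \<in> N" using nor[OF g \<eta>(1)] .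
    ultimately show ?thesis unfolding N'_def by (metis imageI)
  qed
  show ?thesis unfolding HGS_cyclic_def
  proof (intro exI[of _ N'] conjI ballI)
    show "regular_subgroup (lcosets K') N'" using reg' unfolding Y_def .
    show "cyclic_subgroup (BijGroup (lcosets K')) N'" unfolding cyclic_subgroup_def
      using N'gen \<sigma>N unfolding N'_def BY_def Y_def by blast
    fix g \<eta> assume "g \<in> carrier G" "\<eta> \<in> N'"
    thus "lam G K' g \<otimes>\<^bsub>BijGroup (lcosets K')\<^esub> \<eta> \<otimes>\<^bsub>BijGroup (lcosets K')\<^esub>
        inv\<^bsub>BijGroup (lcosets K')\<^esub> (lam G K' g) \<in> N'" using nor' unfolding BY_def Y_def by blast
  qed
qed

end

context group
begin

lemma backward:
  assumes G'S: "subgroup G' G" and HS: "subgroup H G" and HG': "HGS_cyclic G G'"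
    and g: "g \<in> carrier G" and Hdef: "H = g <# G' #> inv g"
  shows "HGS_cyclic G H"
proof -
  have G'G: "G' \<subseteq> carrier G" using subgroup.subset[OF G'S] .
  have HG: "H \<subseteq> carrier G" using subgroup.subset[OF HS] .
  have ig: "inv g \<in> carrier G" using g by simp
  have memH: "s \<in> H \<longleftrightarrow> (\<exists>k\<in>G'. s = g \<otimes> k \<otimes> inv g)" for s unfolding Hdef by (rule conj_mem)
  have to: "(a <# G') #> inv g = (a \<otimes> inv g) <# H" if a: "a \<in> carrier G" for a
  proof
    show "(a <# G') #> inv g \<subseteq> (a \<otimes> inv g) <# H"
    proof
      fix x assume "x \<in> (a <# G') #> inv g"
      then obtain k where k: "k \<in> G'" "x = a \<otimes> k \<otimes> inv g" using conj_mem by blast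
      have kc: "k \<in> carrier G" using k(1) G'G by blast
      have "g \<otimes> k \<otimes> inv g \<in> H" using memH k(1) by blast
      moreover have "x = (a \<otimes> inv g) \<otimes> (g \<otimes> k \<otimes> inv g)"
        using k(2) a g kc by (simp add: m_assoc inv_mult_cancel_left)
      ultimately show "x \<in> (a \<otimes> inv g) <# H" unfolding l_coset_def by blast
    qed
    show "(a \<otimes> inv g) <# H \<subseteq> (a <# G') #> inv g"
    proof
      fix x assume "x \<in> (a \<otimes> inv g) <# H"
      then obtain s where s: "s \<in> H" "x = (a \<otimes> inv g) \<otimes> s" unfolding l_coset_def by blast
      then obtain k where k: "k \<in> G'" "s = g \<otimes> k \<otimes> inv g" using memH by blast
      have kc: "k \<in> carrier G" using k(1) G'G by blast
      have "x = a \<otimes> k \<otimes> inv g" using s(2) k(2) a g kc by (simp add: m_assoc inv_mult_cancel_left)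
      thus "x \<in> (a <# G') #> inv g" using conj_mem k(1) by blast
    qed
  qed
  have backC: "(b <# H) #> g = (b \<otimes> g) <# G'" if b: "b \<in> carrier G" for b
  proof -
    have "(b \<otimes> g) <# G' #> inv g = (b \<otimes> g \<otimes> inv g) <# H" using to b g by simp
    also have "b \<otimes> g \<otimes> inv g = b" using b g by (simp add: m_assoc)
    finally have e: "(b \<otimes> g) <# G' #> inv g = b <# H" .
    have "(b <# H) #> g = ((b \<otimes> g) <# G' #> inv g) #> g" using e by simp
    also have "\<dots> = (b \<otimes> g) <# G'"
      using coset_mult_assoc[OF l_coset_subset_G[OF G'G] ig g] b g G'G
      by (simp add: l_coset_subset_G)
    finally show ?thesis .
  qed
  define \<phi> where "\<phi> = (\<lambda>C. C #> inv g)"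
  have \<phi>bij: "bij_betw \<phi> (lcosets G') (lcosets H)"
  proof (rule bij_betw_byWitness[where f' = "\<lambda>D. D #> g"])
    show "\<forall>C\<in>lcosets G'. \<phi> C #> g = C"
    proof
      fix C assume "C \<in> lcosets G'"
      hence CG: "C \<subseteq> carrier G" using lcosets_sub[OF G'S] by blast
      show "\<phi> C #> g = C" unfolding \<phi>_def using coset_mult_assoc[OF CG ig g] CG g by simp
    qed
    show "\<forall>D\<in>lcosets H. \<phi> (D #> g) = D"
    proof
      fix D assume "D \<in> lcosets H"
      hence DG: "D \<subseteq> carrier G" using lcosets_sub[OF HS] by blast
      show "\<phi> (D #> g) = D" unfolding \<phi>_def using coset_mult_assoc[OF DG g ig] DG g by simp
    qed
    show "\<phi> ` (lcosets G') \<subseteq> lcosets H"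
    proof
      fix D assume "D \<in> \<phi> ` (lcosets G')"
      then obtain a where a: "a \<in> carrier G" "D = (a <# G') #> inv g" unfolding \<phi>_def LCOSETS_def by blast
      thus "D \<in> lcosets H" using to[OF a(1)] a ig unfolding LCOSETS_def by blast
    qed
    show "(\<lambda>D. D #> g) ` (lcosets H) \<subseteq> lcosets G'"
    proof
      fix C assume "C \<in> (\<lambda>D. D #> g) ` (lcosets H)"
      then obtain b where b: "b \<in> carrier G" "C = (b <# H) #> g" unfolding LCOSETS_def by blast
      thus "C \<in> lcosets G'" using backC[OF b(1)] b g unfolding LCOSETS_def by blast
    qed
  qed
  have eqv: "\<phi> (h <# C) = h <# \<phi> C" if h: "h \<in> carrier G" and C: "C \<in> lcosets G'" for h C
    unfolding \<phi>_def using lr_assoc[OF lcosets_sub[OF G'S C] h ig] .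
  show ?thesis by (rule hgs_transport[OF G'S HS \<phi>bij eqv HG'])
qed

end

theorem theorem1p4:
  fixes G :: "('a, 'b) monoid_scheme" and G' H :: "'a set" and p e :: nat
  assumes "group G" and "finite (carrier G)"
    and "subgroup G' G"
    and core_free: "(\<Inter>g\<in>carrier G. g <#\<^bsub>G\<^esub> G' #>\<^bsub>G\<^esub> inv\<^bsub>G\<^esub> g) = {\<one>\<^bsub>G\<^esub>}"
    and "prime p" and "odd p" and "e \<ge> 1"
    and "card (lcosets\<^bsub>G\<^esub> G') = p ^ e"
    and "HGS_cyclic G G'"
    and "subgroup H G"
    and "card (lcosets\<^bsub>G\<^esub> H) = card (lcosets\<^bsub>G\<^esub> G')"
  shows "HGS_cyclic G H \<longleftrightarrow> (\<exists>g\<in>carrier G. H = g <#\<^bsub>G\<^esub> G' #>\<^bsub>G\<^esub> inv\<^bsub>G\<^esub> g)"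
proof
  interpret group G by fact
  assume "HGS_cyclic G H"
  thus "\<exists>g\<in>carrier G. H = g <#\<^bsub>G\<^esub> G' #>\<^bsub>G\<^esub> inv\<^bsub>G\<^esub> g"
    using forward[OF assms(2,3) core_free assms(5-11)] by blast
next
  interpret group G by fact
  assume "\<exists>g\<in>carrier G. H = g <#\<^bsub>G\<^esub> G' #>\<^bsub>G\<^esub> inv\<^bsub>G\<^esub> g"
  then obtain g where "g \<in> carrier G" "H = g <#\<^bsub>G\<^esub> G' #>\<^bsub>G\<^esub> inv\<^bsub>G\<^esub> g" by blast
  thus "HGS_cyclic G H" using backward[OF assms(3,10,9)] by blast
qed

end
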